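(* Let $n\geq 2$. On $\mathfrak{sl}_{n+1}(\mathbb C)$ with commutator bracket, let $\langle X,Y\rangle=\operatorname{tr}(XY^* )$. Embed $\mathfrak{sl}_n(\mathbb C)$ as the upper-left $n\times n$ block, let $I=\sqrt{\tfrac{1}{n(n+1)}}\begin{pmatrix}\mathrm{id}_n&0\\0&-n\end{pmatrix}$ and $\mathfrak s=\operatorname{span}_{\mathbb C}\{e_{i(n+1)},e_{(n+1)i}:1\le i\le n\}$ ($e_{ij}$ the elementary matrices), so that $\mathfrak{sl}_{n+1}(\mathbb C)=\mathfrak{sl}_n(\mathbb C)\oplus\mathbb CI\oplus\mathfrak s$ orthogonally. For $x,y,z>0$ let $\sigma_{x,y,z}=x^{-1}\mathrm{id}_{\mathfrak{sl}_n(\mathbb C)}+y^{-1}\mathrm{id}_{\mathbb CI}+z^{-1}\mathrm{id}_{\mathfrak s}$ and let $P_{x,y,z}$ be the torsion-twisted Chern--Ricci operator of the Hermitian inner product $\langle\sigma_{x,y,z}\cdot,\cdot\rangle$ on $(\mathfrak{sl}_{n+1}(\mathbb C),[\cdot,\cdot])$. Then for all $x,y,z>0$, \[P_{x,y,z}=\Big(nx+\frac{z^2}{x}\Big)\mathrm{id}_{\mathfrak{sl}_n(\mathbb C)}+(n+1)\frac{z^2}{y}\mathrm{id}_{\mathbb CI}+\frac{n+1}{n}\big((n-1)x+y\big)\mathrm{id}_{\mathfrak s}.\]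
   Context: For a complex Lie algebra $(\mathfrak g,\mu)$ with Hermitian inner product $g$, the torsion-twisted Chern--Ricci operator $P^g_\mu$ is the $g$-Hermitian endomorphism defined by $g(P^g_\mu X,X)=\sum_{i<j}|g(\mu(e_i,e_j),X)|^2$ for any $g$-unitary complex basis $\{e_i\}$; equivalently $P^g_\mu=\tfrac12\sum_i\operatorname{ad}_{e_i}\circ\operatorname{ad}_{e_i}^*$ with adjoint taken w.r.t. $g$. It satisfies $g(P\cdot,\cdot)=\Theta(g)$, the torsion-twisted Chern--Ricci form of the corresponding left-invariant metric. *)

theory Defs
  imports Complex_Main
begin

text \<open>Complex matrices are modelled as functions nat => nat => complex; an N x N matrix
  is one whose entries vanish outside the index range {0..<N} x {0..<N} (0-based indices,
  so the paper's index n+1 is our index n).\<close>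

type_synonym cmat = "nat \<Rightarrow> nat \<Rightarrow> complex"

definition mzero :: cmat where "mzero = (\<lambda>i j. 0)"
definition madd :: "cmat \<Rightarrow> cmat \<Rightarrow> cmat" where "madd X Y = (\<lambda>i j. X i j + Y i j)"
definition msc :: "complex \<Rightarrow> cmat \<Rightarrow> cmat" where "msc a X = (\<lambda>i j. a * X i j)"

definition mat_space :: "nat \<Rightarrow> cmat set" where
  "mat_space N = {M. \<forall>i j. (N \<le> i \<or> N \<le> j) \<longrightarrow> M i j = 0}"

definition sl :: "nat \<Rightarrow> cmat set" where
  "sl N = {M \<in> mat_space N. (\<Sum>i<N. M i i) = 0}"

definition comm :: "nat \<Rightarrow> cmat \<Rightarrow> cmat \<Rightarrow> cmat" where
  "comm N X Y = (\<lambda>i j. (\<Sum>k<N. X i k * Y k j) - (\<Sum>k<N. Y i k * X k j))"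

definition frob :: "nat \<Rightarrow> cmat \<Rightarrow> cmat \<Rightarrow> complex" where
  "frob N X Y = (\<Sum>i<N. \<Sum>j<N. X i j * cnj (Y i j))"

definition unitary_basis ::
  "cmat set \<Rightarrow> (cmat \<Rightarrow> cmat \<Rightarrow> complex) \<Rightarrow> (nat \<Rightarrow> cmat) \<Rightarrow> nat \<Rightarrow> bool" where
  "unitary_basis V g es d \<longleftrightarrow>
     (\<forall>i<d. es i \<in> V) \<and>
     (\<forall>i<d. \<forall>j<d. g (es i) (es j) = (if i = j then 1 else 0)) \<and>
     (\<forall>X\<in>V. \<exists>a::nat \<Rightarrow> complex. X = (\<lambda>p q. \<Sum>i<d. a i * es i p q))"

text \<open>Defining property of the torsion-twisted Chern--Ricci operator P of (V, mu, g):
  P is a g-Hermitian (complex-linear) endomorphism of V with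
  g(P X, X) = sum_{i<j} |g(mu(e_i,e_j),X)|^2 for any g-unitary basis.\<close>
definition is_ttcr ::
  "cmat set \<Rightarrow> (cmat \<Rightarrow> cmat \<Rightarrow> complex) \<Rightarrow> (cmat \<Rightarrow> cmat \<Rightarrow> cmat) \<Rightarrow> (cmat \<Rightarrow> cmat) \<Rightarrow> bool" where
  "is_ttcr V g mu P \<longleftrightarrow>
     (\<forall>X\<in>V. P X \<in> V) \<and>
     (\<forall>X\<in>V. \<forall>Y\<in>V. \<forall>a b. P (madd (msc a X) (msc b Y)) = madd (msc a (P X)) (msc b (P Y))) \<and>
     (\<forall>X\<in>V. \<forall>Y\<in>V. g (P X) Y = g X (P Y)) \<and>
     (\<forall>es d. unitary_basis V g es d \<longrightarrow>
        (\<forall>X\<in>V. g (P X) X =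
           complex_of_real (\<Sum>i<d. \<Sum>j\<in>{i<..<d}. (cmod (g (mu (es i) (es j)) X))\<^sup>2)))"

definition ttcr ::
  "cmat set \<Rightarrow> (cmat \<Rightarrow> cmat \<Rightarrow> complex) \<Rightarrow> (cmat \<Rightarrow> cmat \<Rightarrow> cmat) \<Rightarrow> cmat \<Rightarrow> cmat" where
  "ttcr V g mu = (THE P. is_ttcr V g mu P \<and> (\<forall>X. X \<notin> V \<longrightarrow> P X = mzero))"

definition Imat :: "nat \<Rightarrow> cmat" where
  "Imat n = (\<lambda>i j. if i = j \<and> i < n then complex_of_real (sqrt (1 / (real n * (real n + 1))))
                   else if i = j \<and> i = n then - of_nat n * complex_of_real (sqrt (1 / (real n * (real n + 1))))
                   else 0)"

definition prI :: "nat \<Rightarrow> cmat \<Rightarrow> cmat" where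
  "prI n X = msc (frob (n+1) X (Imat n)) (Imat n)"

definition prS :: "nat \<Rightarrow> cmat \<Rightarrow> cmat" where
  "prS n X = (\<lambda>i j. if (i < n \<and> j = n) \<or> (i = n \<and> j < n) then X i j else 0)"

definition prSl :: "nat \<Rightarrow> cmat \<Rightarrow> cmat" where
  "prSl n X = (\<lambda>i j. if i < n \<and> j < n then X i j - prI n X i j else 0)"

definition block_op :: "nat \<Rightarrow> real \<Rightarrow> real \<Rightarrow> real \<Rightarrow> cmat \<Rightarrow> cmat" where
  "block_op n a b c X =
     madd (madd (msc (of_real a) (prSl n X)) (msc (of_real b) (prI n X))) (msc (of_real c) (prS n X))"

definition sigma :: "nat \<Rightarrow> real \<Rightarrow> real \<Rightarrow> real \<Rightarrow> cmat \<Rightarrow> cmat" where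
  "sigma n x y z = block_op n (1/x) (1/y) (1/z)"

definition gxyz :: "nat \<Rightarrow> real \<Rightarrow> real \<Rightarrow> real \<Rightarrow> cmat \<Rightarrow> cmat \<Rightarrow> complex" where
  "gxyz n x y z X Y = frob (n+1) (sigma n x y z X) Y"

end

theory Submission
  imports Defs
begin

definition lc :: "(nat \<Rightarrow> complex) \<Rightarrow> (nat \<Rightarrow> cmat) \<Rightarrow> nat \<Rightarrow> cmat" where
  "lc a E d = (\<lambda>p q. \<Sum>i<d. a i * E i p q)"

definition lin1 :: "cmat set \<Rightarrow> (cmat \<Rightarrow> cmat \<Rightarrow> complex) \<Rightarrow> bool" where
  "lin1 V g \<longleftrightarrow> (\<forall>a E d W. (\<forall>i<d. E i \<in> V) \<longrightarrow> W \<in> V \<longrightarrow> g (lc a E d) W = (\<Sum>i<d. a i * g (E i) W))"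
definition lin2 :: "cmat set \<Rightarrow> (cmat \<Rightarrow> cmat \<Rightarrow> complex) \<Rightarrow> bool" where
  "lin2 V g \<longleftrightarrow> (\<forall>a E d W. (\<forall>i<d. E i \<in> V) \<longrightarrow> W \<in> V \<longrightarrow> g W (lc a E d) = (\<Sum>i<d. cnj (a i) * g W (E i)))"
definition lcclosed :: "cmat set \<Rightarrow> bool" where
  "lcclosed V \<longleftrightarrow> (\<forall>a E d. (\<forall>i<d. E i \<in> V) \<longrightarrow> lc a E d \<in> V)"
definition flin :: "cmat set \<Rightarrow> (cmat \<Rightarrow> complex) \<Rightarrow> bool" where
  "flin V \<phi> \<longleftrightarrow> (\<forall>a E d. (\<forall>i<d. E i \<in> V) \<longrightarrow> \<phi> (lc a E d) = (\<Sum>i<d. a i * \<phi> (E i)))"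

lemma ub_coeff:
  assumes ub: "unitary_basis V g e d" and l1: "lin1 V g" and k: "k < d"
  shows "g (lc a e d) (e k) = a k"
proof -
  have ev: "\<forall>i<d. e i \<in> V" using ub unfolding unitary_basis_def by blast
  have on: "\<And>i j. i<d \<Longrightarrow> j<d \<Longrightarrow> g (e i) (e j) = (if i = j then 1 else 0)"
    using ub unfolding unitary_basis_def by blast
  have "g (lc a e d) (e k) = (\<Sum>i<d. a i * g (e i) (e k))"
    using l1 ev k unfolding lin1_def by blast
  also have "\<dots> = (\<Sum>i<d. (if i = k then a i else 0))"
    by (rule sum.cong) (auto simp: on k)
  also have "\<dots> = a k" using k by simp
  finally show ?thesis .
qed

lemma ub_expand:
  assumes ub: "unitary_basis V g e d" and l1: "lin1 V g" and v: "v \<in> V"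
  shows "v = lc (\<lambda>i. g v (e i)) e d"
proof -
  obtain a where a: "v = (\<lambda>p q. \<Sum>i<d. a i * e i p q)" using ub v unfolding unitary_basis_def by blast
  hence va: "v = lc a e d" by (simp add: lc_def)
  have "\<And>k. k < d \<Longrightarrow> g v (e k) = a k" using ub_coeff[OF ub l1] va by simp
  hence "lc (\<lambda>i. g v (e i)) e d = lc a e d" unfolding lc_def by (intro ext sum.cong) auto
  thus ?thesis using va by simp
qed

lemma ub_parseval:
  assumes ub: "unitary_basis V g e d" and l1: "lin1 V g" and l2: "lin2 V g" and w: "w \<in> V"
  shows "g w w = of_real (\<Sum>k<d. (cmod (g (e k) w))\<^sup>2)"
proof -
  have ev: "\<forall>i<d. e i \<in> V" using ub unfolding unitary_basis_def by blast
  have on: "\<And>i j. i<d \<Longrightarrow> j<d \<Longrightarrow> g (e i) (e j) = (if i = j then 1 else 0)"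
    using ub unfolding unitary_basis_def by blast
  define a where "a = (\<lambda>i. g w (e i))"
  have wa: "w = lc a e d" using ub_expand[OF ub l1 w] by (simp add: a_def)
  have ek: "g (e k) w = cnj (a k)" if k: "k < d" for k
  proof -
    have "g (e k) w = (\<Sum>i<d. cnj (a i) * g (e k) (e i))"
      using l2 ev k wa unfolding lin2_def by metis
    also have "\<dots> = (\<Sum>i<d. (if i = k then cnj (a i) else 0))"
      by (rule sum.cong) (auto simp: on k)
    finally show ?thesis using k by simp
  qed
  have "g w w = (\<Sum>i<d. a i * g (e i) w)"
    using l1 ev w wa unfolding lin1_def by metis
  also have "\<dots> = (\<Sum>i<d. of_real ((cmod (g (e i) w))\<^sup>2))"
    by (rule sum.cong) (simp_all add: ek complex_mult_cnj cmod_def)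
  finally show ?thesis by simp
qed

lemma frame_functional:
  assumes ub: "unitary_basis V g e d" and l1: "lin1 V g" and l2: "lin2 V g" and cl: "lcclosed V"
    and fl: "flin V \<phi>" and fin: "finite L" and bV: "\<forall>l\<in>L. b l \<in> V"
    and fr: "\<forall>w\<in>V. g w w = of_real (\<Sum>l\<in>L. (cmod (g (b l) w))\<^sup>2)"
  shows "(\<Sum>i<d. (cmod (\<phi> (e i)))\<^sup>2) = (\<Sum>l\<in>L. (cmod (\<phi> (b l)))\<^sup>2)"
proof -
  have ev: "\<forall>i<d. e i \<in> V" using ub unfolding unitary_basis_def by blast
  define w where "w = lc (\<lambda>i. cnj (\<phi> (e i))) e d"
  have wV: "w \<in> V" using cl ev unfolding lcclosed_def w_def by blast
  have rep: "\<phi> v = g v w" if v: "v \<in> V" for v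
  proof -
    have "g v w = (\<Sum>i<d. \<phi> (e i) * g v (e i))"
      using l2 ev v unfolding lin2_def w_def by simp
    also have "\<dots> = \<phi> (lc (\<lambda>i. g v (e i)) e d)"
      using fl ev unfolding flin_def by (simp add: mult.commute)
    also have "\<dots> = \<phi> v" using ub_expand[OF ub l1 v] by simp
    finally show ?thesis by simp
  qed
  have "(\<Sum>i<d. (cmod (\<phi> (e i)))\<^sup>2) = (\<Sum>i<d. (cmod (g (e i) w))\<^sup>2)"
    using rep ev by simp
  also have "of_real \<dots> = g w w" using ub_parseval[OF ub l1 l2 wV] by simp
  also have "\<dots> = of_real (\<Sum>l\<in>L. (cmod (g (b l) w))\<^sup>2)" using fr wV by blast
  finally have "(\<Sum>i<d. (cmod (\<phi> (e i)))\<^sup>2) = (\<Sum>l\<in>L. (cmod (g (b l) w))\<^sup>2)"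
    using of_real_eq_iff by blast
  also have "\<dots> = (\<Sum>l\<in>L. (cmod (\<phi> (b l)))\<^sup>2)" using rep bV by simp
  finally show ?thesis .
qed

lemma frame_bilinear:
  assumes ub: "unitary_basis V g e d" and l1: "lin1 V g" and l2: "lin2 V g" and cl: "lcclosed V"
    and fl1: "\<forall>u\<in>V. flin V (f u)" and fl2: "\<forall>v\<in>V. flin V (\<lambda>u. f u v)"
    and fin: "finite L" and bV: "\<forall>l\<in>L. b l \<in> V"
    and fr: "\<forall>w\<in>V. g w w = of_real (\<Sum>l\<in>L. (cmod (g (b l) w))\<^sup>2)"
  shows "(\<Sum>i<d. \<Sum>j<d. (cmod (f (e i) (e j)))\<^sup>2) = (\<Sum>k\<in>L. \<Sum>l\<in>L. (cmod (f (b k) (b l)))\<^sup>2)"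
proof -
  have ev: "\<forall>i<d. e i \<in> V" using ub unfolding unitary_basis_def by blast
  have "(\<Sum>i<d. \<Sum>j<d. (cmod (f (e i) (e j)))\<^sup>2) = (\<Sum>i<d. \<Sum>l\<in>L. (cmod (f (e i) (b l)))\<^sup>2)"
    by (rule sum.cong[OF refl], rule frame_functional[OF ub l1 l2 cl _ fin bV fr]) (use fl1 ev in auto)
  also have "\<dots> = (\<Sum>l\<in>L. \<Sum>i<d. (cmod (f (e i) (b l)))\<^sup>2)" by (rule sum.swap)
  also have "\<dots> = (\<Sum>l\<in>L. \<Sum>k\<in>L. (cmod (f (b k) (b l)))\<^sup>2)"
    by (rule sum.cong[OF refl], rule frame_functional[OF ub l1 l2 cl _ fin bV fr, where \<phi>="\<lambda>u. f u _"])
       (use fl2 bV in auto)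
  also have "\<dots> = (\<Sum>k\<in>L. \<Sum>l\<in>L. (cmod (f (b k) (b l)))\<^sup>2)" by (rule sum.swap)
  finally show ?thesis .
qed

lemma triangle_half:
  fixes h :: "nat \<Rightarrow> nat \<Rightarrow> real"
  assumes sym: "\<And>i j. h i j = h j i" and diag: "\<And>i. h i i = 0"
  shows "(\<Sum>i<d. \<Sum>j\<in>{i<..<d}. h i j) = (\<Sum>i<d. \<Sum>j<d. h i j) / 2"
proof (induction d)
  case 0 then show ?case by simp
next
  case (Suc d)
  have A: "(\<Sum>i<Suc d. \<Sum>j\<in>{i<..<Suc d}. h i j) = (\<Sum>i<d. \<Sum>j\<in>{i<..<d}. h i j) + (\<Sum>i<d. h i d)"
  proof -
    have "\<And>i. i < d \<Longrightarrow> {i<..<Suc d} = insert d {i<..<d}" by auto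
    hence "(\<Sum>i<d. \<Sum>j\<in>{i<..<Suc d}. h i j) = (\<Sum>i<d. h i d + (\<Sum>j\<in>{i<..<d}. h i j))"
      by (intro sum.cong) auto
    moreover have "{d<..<Suc d} = {}" by auto
    ultimately show ?thesis by (simp add: sum.distrib)
  qed
  have B: "(\<Sum>i<Suc d. \<Sum>j<Suc d. h i j) = (\<Sum>i<d. \<Sum>j<d. h i j) + 2 * (\<Sum>i<d. h i d)"
    by (simp add: sum.distrib diag sym[of d])
  show ?case using A B Suc by simp
qed


lemma sum_upto_Suc: fixes f :: "nat \<Rightarrow> 'a::comm_monoid_add" shows "(\<Sum>i<n+1. f i) = (\<Sum>i<n. f i) + f n"
  unfolding Suc_eq_plus1[symmetric] by (rule sum.lessThan_Suc)

definition trn :: "nat \<Rightarrow> cmat \<Rightarrow> complex" where "trn n M = (\<Sum>i<n. M i i)"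
definition sq :: "nat \<Rightarrow> real" where "sq n = sqrt (1 / (real n * (real n + 1)))"
definition SS :: "nat \<Rightarrow> cmat \<Rightarrow> cmat \<Rightarrow> complex" where
  "SS n M X = (\<Sum>i<n. \<Sum>j<n. M i j * cnj (X i j))"
definition SB :: "nat \<Rightarrow> cmat \<Rightarrow> cmat \<Rightarrow> complex" where
  "SB n M X = (\<Sum>i<n. M i n * cnj (X i n) + M n i * cnj (X n i))"
definition Gf :: "nat \<Rightarrow> real \<Rightarrow> real \<Rightarrow> real \<Rightarrow> cmat \<Rightarrow> cmat \<Rightarrow> complex" where
  "Gf n x y z M X = of_real (1/x) * (SS n M X - trn n M * cnj (trn n X) / of_nat n)
     + of_real ((real n + 1)/(real n * y)) * (trn n M * cnj (trn n X)) + of_real (1/z) * SB n M X"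

lemma sq_sq: "n \<ge> 1 \<Longrightarrow> sq n * sq n = 1 / (real n * (real n + 1))"
  unfolding sq_def by (simp add: real_sqrt_mult_self)

lemma sl_nn: "M \<in> sl (n+1) \<Longrightarrow> M n n = - trn n M"
  unfolding sl_def trn_def by (auto simp: sum_upto_Suc add_eq_0_iff)

lemma sl_zero: "M \<in> sl (n+1) \<Longrightarrow> (n+1 \<le> i \<or> n+1 \<le> j) \<Longrightarrow> M i j = 0"
  unfolding sl_def mat_space_def by blast

lemma Imat_diag: "Imat n i j = (if i = j then (if i < n then of_real (sq n) else if i = n then - of_nat n * of_real (sq n) else 0) else 0)"
  unfolding Imat_def sq_def by auto

lemma sum_delta_r: fixes f :: "nat \<Rightarrow> complex" assumes "finite A" shows "(\<Sum>j\<in>A. f j * (if i = j then c else 0)) = (if i \<in> A then f i * c else 0)"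
proof -
  have "(\<Sum>j\<in>A. f j * (if i = j then c else 0)) = (\<Sum>j\<in>A. if i = j then f i * c else 0)"
    by (rule sum.cong) auto
  thus ?thesis using assms by (simp add: sum.delta)
qed

lemma sum_delta_l: fixes f :: "nat \<Rightarrow> complex" assumes "finite A" shows "(\<Sum>j\<in>A. (if i = j then c else 0) * f j) = (if i \<in> A then c * f i else 0)"
proof -
  have "(\<Sum>j\<in>A. (if i = j then c else 0) * f j) = (\<Sum>j\<in>A. if i = j then c * f i else 0)"
    by (rule sum.cong) auto
  thus ?thesis using assms by (simp add: sum.delta)
qed

lemma cnj_Imat: "cnj (Imat n i j) = Imat n i j"
  unfolding Imat_def by simp

lemma frob_I: "frob (n+1) M (Imat n) = of_real (sq n) * (trn n M - of_nat n * M n n)"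
proof -
  have "frob (n+1) M (Imat n) = (\<Sum>i<n+1. M i i * (if i < n then of_real (sq n) else if i = n then - of_nat n * of_real (sq n) else 0))"
    unfolding frob_def cnj_Imat unfolding Imat_diag by (simp add: sum_delta_r del: of_nat_Suc)
  also have "\<dots> = (\<Sum>i<n. M i i * of_real (sq n)) - M n n * of_nat n * of_real (sq n)"
    by (simp add: sum_upto_Suc)
  finally show ?thesis unfolding trn_def sum_distrib_right[symmetric] by (simp add: algebra_simps)
qed

lemma frob_I_sl: "M \<in> sl (n+1) \<Longrightarrow> frob (n+1) M (Imat n) = of_real (sq n) * (of_nat n + 1) * trn n M"
  using frob_I[of n M] sl_nn[of M n] by (simp add: algebra_simps)

lemma frob_cnj: "frob N A B = cnj (frob N B A)"
  unfolding frob_def by (simp add: mult.commute)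

lemma frob_madd: "frob N (madd A B) X = frob N A X + frob N B X"
  unfolding frob_def madd_def by (simp add: sum.distrib distrib_right)

lemma frob_msc: "frob N (msc a A) X = a * frob N A X"
  unfolding frob_def msc_def by (simp add: sum_distrib_left mult.assoc)

lemma frob_prS: "frob (n+1) (prS n M) X = SB n M X"
  unfolding frob_def prS_def SB_def by (simp add: sum.distrib sum_upto_Suc)

lemma frob_prI: "frob (n+1) (prI n M) X = frob (n+1) M (Imat n) * cnj (frob (n+1) X (Imat n))"
  unfolding prI_def frob_msc by (subst frob_cnj) simp

lemma frob_prSl: "frob (n+1) (prSl n M) X = SS n M X - frob (n+1) M (Imat n) * of_real (sq n) * cnj (trn n X)"
proof -
  have "frob (n+1) (prSl n M) X = (\<Sum>i<n. \<Sum>j<n. (M i j - prI n M i j) * cnj (X i j))"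
    unfolding frob_def prSl_def by (simp add: sum_upto_Suc)
  also have "\<dots> = SS n M X - (\<Sum>i<n. \<Sum>j<n. prI n M i j * cnj (X i j))"
    unfolding SS_def by (simp add: left_diff_distrib sum_subtractf)
  also have "(\<Sum>i<n. \<Sum>j<n. prI n M i j * cnj (X i j)) = frob (n+1) M (Imat n) * of_real (sq n) * cnj (trn n X)"
  proof -
    have "(\<Sum>j<n. prI n M i j * cnj (X i j)) = frob (n+1) M (Imat n) * of_real (sq n) * cnj (X i i)" if i: "i < n" for i
    proof -
      have "(\<Sum>j<n. prI n M i j * cnj (X i j)) = (\<Sum>j<n. (if i = j then frob (n+1) M (Imat n) * of_real (sq n) else 0) * cnj (X i j))"
        by (rule sum.cong) (auto simp: prI_def msc_def Imat_diag i)
      thus ?thesis using i by (simp add: sum_delta_l)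
    qed
    hence "(\<Sum>i<n. \<Sum>j<n. prI n M i j * cnj (X i j)) = (\<Sum>i<n. frob (n+1) M (Imat n) * of_real (sq n) * cnj (X i i))"
      by (intro sum.cong) auto
    thus ?thesis unfolding trn_def by (simp add: sum_distrib_left)
  qed
  finally show ?thesis .
qed

lemma g_eq:
  assumes n: "n \<ge> 1" and M: "M \<in> sl (n+1)" and X: "X \<in> sl (n+1)"
  shows "gxyz n x y z M X = Gf n x y z M X"
proof -
  define s where "s = (of_real (sq n) :: complex)"
  have cs: "cnj s = s" unfolding s_def by simp
  have s2: "s * s * (of_nat n * (of_nat n + 1)) = 1"
  proof -
    have "sq n * sq n * (real n * (real n + 1)) = 1" using sq_sq[OF n] n by simp
    hence "of_real (sq n * sq n * (real n * (real n + 1))) = (1::complex)" by simp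
    thus ?thesis unfolding s_def by simp
  qed
  have nz: "(of_nat n :: complex) \<noteq> 0" using n by simp
  have e1: "s * (of_nat n + 1) * trn n M * s * cnj (trn n X) = trn n M * cnj (trn n X) / of_nat n"
  proof -
    have "s * (of_nat n + 1) * trn n M * s * cnj (trn n X) = (s * s * (of_nat n * (of_nat n + 1))) * (trn n M * cnj (trn n X)) / of_nat n"
      using nz by (simp add: field_simps)
    thus ?thesis using s2 by simp
  qed
  have e2: "s * (of_nat n + 1) * trn n M * cnj (s * (of_nat n + 1) * trn n X) = of_real ((real n + 1) / real n) * (trn n M * cnj (trn n X))"
  proof -
    have "s * (of_nat n + 1) * trn n M * cnj (s * (of_nat n + 1) * trn n X) = (s * s * (of_nat n * (of_nat n + 1))) * ((of_nat n + 1) / of_nat n) * (trn n M * cnj (trn n X))"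
      using nz by (simp add: field_simps cs)
    thus ?thesis using s2 by simp
  qed
  have "gxyz n x y z M X = of_real (1/x) * frob (n+1) (prSl n M) X + of_real (1/y) * frob (n+1) (prI n M) X
         + of_real (1/z) * frob (n+1) (prS n M) X"
    unfolding gxyz_def sigma_def block_op_def by (simp add: frob_madd frob_msc)
  also have "\<dots> = of_real (1/x) * (SS n M X - trn n M * cnj (trn n X) / of_nat n)
     + of_real (1/y) * (of_real ((real n + 1) / real n) * (trn n M * cnj (trn n X))) + of_real (1/z) * SB n M X"
    unfolding frob_prSl frob_prI frob_prS frob_I_sl[OF M] frob_I_sl[OF X] s_def[symmetric] e1 e2 by simp
  also have "\<dots> = Gf n x y z M X"
    unfolding Gf_def by (simp add: mult.commute)
  finally show ?thesis .
qed


lemma lc_apply: "lc a E d p q = (\<Sum>i<d. a i * E i p q)" by (simp add: lc_def)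

lemma trn_lc: "trn n (lc a E d) = (\<Sum>i<d. a i * trn n (E i))"
  unfolding trn_def lc_def by (simp add: sum_distrib_left sum.swap[of _ "{..<n}"])

lemma SS_lc1: "SS n (lc a E d) X = (\<Sum>i<d. a i * SS n (E i) X)"
  unfolding SS_def lc_def by (simp add: sum_distrib_left sum_distrib_right sum.swap[of _ "{..<d}"] mult.assoc)

lemma SS_lc2: "SS n X (lc a E d) = (\<Sum>i<d. cnj (a i) * SS n X (E i))"
  unfolding SS_def lc_def by (simp add: sum_distrib_left sum_distrib_right sum.swap[of _ "{..<d}"] algebra_simps)

lemma SB_lc1: "SB n (lc a E d) X = (\<Sum>i<d. a i * SB n (E i) X)"
  unfolding SB_def lc_def by (simp add: sum_distrib_left sum_distrib_right sum.distrib sum.swap[of _ "{..<d}"] algebra_simps)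

lemma SB_lc2: "SB n X (lc a E d) = (\<Sum>i<d. cnj (a i) * SB n X (E i))"
  unfolding SB_def lc_def by (simp add: sum_distrib_left sum_distrib_right sum.distrib sum.swap[of _ "{..<d}"] algebra_simps)

lemma Gf_lc1: "Gf n x y z (lc a E d) X = (\<Sum>i<d. a i * Gf n x y z (E i) X)"
  unfolding Gf_def SS_lc1 SB_lc1 trn_lc
  by (simp add: sum_distrib_left sum_distrib_right sum.distrib sum_subtractf algebra_simps sum_divide_distrib)

lemma Gf_lc2: "Gf n x y z X (lc a E d) = (\<Sum>i<d. cnj (a i) * Gf n x y z X (E i))"
  unfolding Gf_def SS_lc2 SB_lc2 trn_lc
  by (simp add: sum_distrib_left sum_distrib_right sum.distrib sum_subtractf algebra_simps sum_divide_distrib)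

lemma lc_in_sl: assumes "\<forall>i<d. E i \<in> sl (n+1)" shows "lc a E d \<in> sl (n+1)"
proof -
  have z: "\<forall>i<d. \<forall>p q. (n+1 \<le> p \<or> n+1 \<le> q) \<longrightarrow> E i p q = 0" and t: "\<forall>i<d. (\<Sum>p<n+1. E i p p) = 0"
    using assms unfolding sl_def mat_space_def by auto
  have "(\<Sum>p<n+1. lc a E d p p) = (\<Sum>i<d. a i * (\<Sum>p<n+1. E i p p))"
    unfolding lc_def sum_distrib_left by (rule sum.swap)
  also have "\<dots> = 0" using t by simp
  finally have "(\<Sum>p<n+1. lc a E d p p) = 0" .
  moreover have "\<forall>p q. (n+1 \<le> p \<or> n+1 \<le> q) \<longrightarrow> lc a E d p q = 0"
    using z unfolding lc_def by simp
  ultimately show ?thesis unfolding sl_def mat_space_def by simp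
qed

lemma lin_props:
  assumes n: "n \<ge> 1"
  shows "lin1 (sl (n+1)) (gxyz n x y z)" "lin2 (sl (n+1)) (gxyz n x y z)" "lcclosed (sl (n+1))"
proof -
  show "lin1 (sl (n+1)) (gxyz n x y z)" unfolding lin1_def
    using g_eq[OF n] lc_in_sl Gf_lc1 by simp
  show "lin2 (sl (n+1)) (gxyz n x y z)" unfolding lin2_def
    using g_eq[OF n] lc_in_sl Gf_lc2 by simp
  show "lcclosed (sl (n+1))" unfolding lcclosed_def using lc_in_sl by blast
qed

lemma Gf_herm: "Gf n x y z M X = cnj (Gf n x y z X M)"
  unfolding Gf_def SS_def SB_def by (simp add: algebra_simps)

lemma trn_ms: "trn n (madd (msc a A) (msc b B)) = a * trn n A + b * trn n B"
  unfolding trn_def madd_def msc_def by (simp add: sum.distrib sum_distrib_left)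
lemma SS_ms: "SS n (madd (msc a A) (msc b B)) W = a * SS n A W + b * SS n B W"
  unfolding SS_def madd_def msc_def by (simp add: sum.distrib sum_distrib_left algebra_simps)
lemma SB_ms: "SB n (madd (msc a A) (msc b B)) W = a * SB n A W + b * SB n B W"
  unfolding SB_def madd_def msc_def by (simp add: sum.distrib sum_distrib_left algebra_simps)
lemma Gf_ms: "Gf n x y z (madd (msc a A) (msc b B)) W = a * Gf n x y z A W + b * Gf n x y z B W"
  unfolding Gf_def trn_ms SS_ms SB_ms by (simp add: algebra_simps diff_divide_distrib add_divide_distrib)

lemma ms_in_sl: assumes A: "A \<in> sl (n+1)" and B: "B \<in> sl (n+1)" shows "madd (msc a A) (msc b B) \<in> sl (n+1)"
proof -
  have "(\<Sum>i<n+1. madd (msc a A) (msc b B) i i) = a * (trn n A + A n n) + b * (trn n B + B n n)"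
    unfolding madd_def msc_def trn_def sum_upto_Suc by (simp add: sum.distrib sum_distrib_left algebra_simps)
  also have "\<dots> = 0" using sl_nn[OF A] sl_nn[OF B] by simp
  finally show ?thesis using A B unfolding sl_def mat_space_def madd_def msc_def by auto
qed

lemma SS_center:
  "SS n M X - trn n M * cnj (trn n X) / of_nat n =
   (\<Sum>i<n. \<Sum>j<n. (M i j - (if i = j then trn n M / of_nat n else 0)) * cnj (X i j - (if i = j then trn n X / of_nat n else 0)))"
  (is "_ = ?R")
proof (cases "n = 0")
  case True then show ?thesis unfolding SS_def trn_def by simp
next
  case False
  hence nz: "(of_nat n :: complex) \<noteq> 0" by simp
  have "?R = (\<Sum>i<n. \<Sum>j<n. M i j * cnj (X i j)
      - (if i = j then cnj (trn n X) / of_nat n else 0) * M i j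
      - (if i = j then trn n M / of_nat n else 0) * cnj (X i j)
      + (if i = j then trn n M * cnj (trn n X) / (of_nat n * of_nat n) else 0))"
    by (intro sum.cong refl) (auto simp: algebra_simps)
  also have "\<dots> = SS n M X - cnj (trn n X) / of_nat n * trn n M - trn n M / of_nat n * cnj (trn n X)
      + of_nat n * (trn n M * cnj (trn n X) / (of_nat n * of_nat n))"
    unfolding SS_def trn_def
    by (simp add: sum.distrib sum_subtractf sum_delta_l sum_distrib_left cnj_sum del: sum_divide_distrib)
  also have "\<dots> = SS n M X - trn n M * cnj (trn n X) / of_nat n"
    using nz by (simp add: field_simps)
  finally show ?thesis by simp
qed

lemma sumsq_of_real: "(\<Sum>i\<in>A. f i * cnj (f i)) = of_real (\<Sum>i\<in>A. (cmod (f i))\<^sup>2)"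
  by (simp only: of_real_sum complex_norm_square)

lemma Gf_self:
  "Gf n x y z W W = of_real ((1/x) * (\<Sum>i<n. \<Sum>j<n. (cmod (W i j - (if i = j then trn n W / of_nat n else 0)))\<^sup>2)
     + ((real n + 1)/(real n * y)) * (cmod (trn n W))\<^sup>2
     + (1/z) * (\<Sum>i<n. (cmod (W i n))\<^sup>2 + (cmod (W n i))\<^sup>2))"
proof -
  have a: "SS n W W - trn n W * cnj (trn n W) / of_nat n = of_real (\<Sum>i<n. \<Sum>j<n. (cmod (W i j - (if i = j then trn n W / of_nat n else 0)))\<^sup>2)"
    unfolding SS_center by (simp only: of_real_sum complex_norm_square)
  have b: "SB n W W = of_real (\<Sum>i<n. (cmod (W i n))\<^sup>2 + (cmod (W n i))\<^sup>2)"
    unfolding SB_def by (simp only: of_real_sum of_real_add complex_norm_square)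
  have c: "trn n W * cnj (trn n W) = of_real ((cmod (trn n W))\<^sup>2)" by (simp only: complex_norm_square)
  show ?thesis unfolding Gf_def a unfolding b c by (simp only: of_real_mult of_real_add)
qed

lemma Gf_pos_zero:
  assumes n: "n \<ge> 1" and x: "x > 0" and y: "y > 0" and z: "z > 0" and W: "W \<in> sl (n+1)"
    and G: "Gf n x y z W W = 0"
  shows "W = mzero"
proof -
  define A1 where "A1 = (\<Sum>i<n. \<Sum>j<n. (cmod (W i j - (if i = j then trn n W / of_nat n else 0)))\<^sup>2)"
  define A2 where "A2 = (\<Sum>i<n. (cmod (W i n))\<^sup>2 + (cmod (W n i))\<^sup>2)"
  have A1: "A1 \<ge> 0" unfolding A1_def by (intro sum_nonneg) auto
  have A2: "A2 \<ge> 0" unfolding A2_def by (intro sum_nonneg) auto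
  have k: "(real n + 1)/(real n * y) > 0" using n y by simp
  have "(1/x) * A1 + ((real n + 1)/(real n * y)) * (cmod (trn n W))\<^sup>2 + (1/z) * A2 = 0"
    using G unfolding Gf_self A1_def[symmetric] A2_def[symmetric] by (simp only: of_real_eq_0_iff)
  moreover have "(1/x) * A1 \<ge> 0" "(1/z) * A2 \<ge> 0" using A1 A2 x z by auto
  moreover have "((real n + 1)/(real n * y)) * (cmod (trn n W))\<^sup>2 \<ge> 0"
    by (rule mult_nonneg_nonneg) (use k in auto)
  ultimately have e1: "(1/x) * A1 = 0" and e2: "(1/z) * A2 = 0" and e3: "((real n + 1)/(real n * y)) * (cmod (trn n W))\<^sup>2 = 0"
    by linarith+
  have A10: "A1 = 0" using e1 x by simp
  have A20: "A2 = 0" using e2 z by simp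
  have t0: "trn n W = 0" using e3 k n y by simp
  have u: "\<forall>i<n. \<forall>j<n. W i j - (if i = j then trn n W / of_nat n else 0) = 0"
  proof (intro allI impI)
    fix i j assume i: "i < n" and j: "j < n"
    have "\<forall>i\<in>{..<n}. (\<Sum>j<n. (cmod (W i j - (if i = j then trn n W / of_nat n else 0)))\<^sup>2) = 0"
      using A10 unfolding A1_def by (subst (asm) sum_nonneg_eq_0_iff) (auto intro: sum_nonneg)
    hence "(\<Sum>j<n. (cmod (W i j - (if i = j then trn n W / of_nat n else 0)))\<^sup>2) = 0" using i by auto
    hence "(cmod (W i j - (if i = j then trn n W / of_nat n else 0)))\<^sup>2 = 0"
      using j by (subst (asm) sum_nonneg_eq_0_iff) auto
    thus "W i j - (if i = j then trn n W / of_nat n else 0) = 0" by simp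
  qed
  have v: "\<forall>i<n. W i n = 0 \<and> W n i = 0"
  proof (intro allI impI)
    fix i assume i: "i < n"
    have "(cmod (W i n))\<^sup>2 + (cmod (W n i))\<^sup>2 = 0"
      using A20 i unfolding A2_def by (subst (asm) sum_nonneg_eq_0_iff) (auto intro: add_nonneg_nonneg)
    thus "W i n = 0 \<and> W n i = 0" by (simp add: add_nonneg_eq_0_iff)
  qed
  have w: "W n n = 0" using sl_nn[OF W] t0 by simp
  show ?thesis
  proof (rule ext, rule ext)
    fix i j
    show "W i j = mzero i j"
    proof (cases "n+1 \<le> i \<or> n+1 \<le> j")
      case True thus ?thesis using sl_zero[OF W] by (simp add: mzero_def)
    next
      case False
      hence "i \<le> n" "j \<le> n" by auto
      thus ?thesis using u v w t0 unfolding mzero_def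
        by (cases "i = n"; cases "j = n") (auto simp: le_less)
    qed
  qed
qed


lemma s2c: assumes n: "n \<ge> 1" shows "of_real (sq n) * of_real (sq n) * (of_nat n * (of_nat n + 1)) = (1::complex)"
proof -
  have "sq n * sq n * (real n * (real n + 1)) = 1" using sq_sq[OF n] n by simp
  hence "of_real (sq n * sq n * (real n * (real n + 1))) = (1::complex)" by simp
  thus ?thesis by simp
qed

lemma s2c': assumes n: "n \<ge> 1" shows "of_real (sq n) * of_real (sq n) * (of_nat n + 1) = (1::complex) / of_nat n"
proof -
  have nz: "(of_nat n :: complex) \<noteq> 0" using n by simp
  show ?thesis using s2c[OF n] nz by (simp add: field_simps)
qed

lemma prI_entries:
  assumes n: "n \<ge> 1" and X: "X \<in> sl (n+1)"
  shows "prI n X i j = (if i = j \<and> i < n then trn n X / of_nat n else if i = j \<and> i = n then - trn n X else 0)"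
proof -
  define S where "S = (of_real (sq n) :: complex)"
  have h: "S * S * (of_nat n + 1) = 1 / of_nat n" using s2c'[OF n] unfolding S_def .
  have nz: "(of_nat n :: complex) \<noteq> 0" using n by simp
  have e: "prI n X i j = S * (of_nat n + 1) * trn n X * Imat n i j"
    unfolding prI_def msc_def frob_I_sl[OF X] S_def by simp
  show ?thesis
  proof (cases "i = j \<and> i < n")
    case True
    hence "prI n X i j = (S * S * (of_nat n + 1)) * trn n X" unfolding e Imat_diag S_def by simp
    thus ?thesis using True h by simp
  next
    case F1: False
    show ?thesis
    proof (cases "i = j \<and> i = n")
      case True
      hence "prI n X i j = - (S * S * (of_nat n + 1)) * of_nat n * trn n X" unfolding e Imat_diag S_def by simp
      thus ?thesis using True F1 h nz by simp
    next
      case False thus ?thesis using F1 unfolding e Imat_def by auto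
    qed
  qed
qed

lemma sum_plus_const: "(\<Sum>i<n. f i + (c::complex)) = (\<Sum>i<n. f i) + of_nat n * c"
  by (simp add: sum.distrib)

lemma block_entries:
  assumes n: "n \<ge> 1" and X: "X \<in> sl (n+1)"
  shows "block_op n a b c X i j = (if i < n \<and> j < n then of_real a * X i j + (if i = j then of_real (b - a) * trn n X / of_nat n else 0)
     else if (i < n \<and> j = n) \<or> (i = n \<and> j < n) then of_real c * X i j
     else if i = n \<and> j = n then - of_real b * trn n X else 0)"
  unfolding block_op_def madd_def msc_def prSl_def prS_def prI_entries[OF n X]
  by (auto simp: algebra_simps diff_divide_distrib)

lemma trn_block: assumes n: "n \<ge> 1" and X: "X \<in> sl (n+1)"
  shows "trn n (block_op n a b c X) = of_real b * trn n X"
proof -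
  have nz: "(of_nat n :: complex) \<noteq> 0" using n by simp
  have "trn n (block_op n a b c X) = (\<Sum>i<n. of_real a * X i i + of_real (b - a) * trn n X / of_nat n)"
    unfolding trn_def block_entries[OF n X] by simp
  also have "\<dots> = of_real a * trn n X + of_nat n * (of_real (b - a) * trn n X / of_nat n)"
    unfolding sum_plus_const by (simp add: trn_def sum_distrib_left)
  also have "\<dots> = of_real a * trn n X + of_real (b - a) * trn n X" using nz by simp
  also have "\<dots> = of_real b * trn n X" by (simp add: algebra_simps)
  finally show ?thesis .
qed

lemma block_in_sl:
  assumes n: "n \<ge> 1" and X: "X \<in> sl (n+1)"
  shows "block_op n a b c X \<in> sl (n+1)"
proof -
  have "(\<Sum>i<n+1. block_op n a b c X i i) = trn n (block_op n a b c X) + block_op n a b c X n n"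
    unfolding sum_upto_Suc trn_def ..
  also have "\<dots> = 0" unfolding trn_block[OF n X] block_entries[OF n X] by simp
  finally show ?thesis unfolding sl_def mat_space_def block_entries[OF n X] by auto
qed

lemma SS_block: assumes n: "n \<ge> 1" and X: "X \<in> sl (n+1)"
  shows "SS n (block_op n a b c X) W = of_real a * SS n X W + of_real (b - a) * trn n X / of_nat n * cnj (trn n W)"
proof -
  have "SS n (block_op n a b c X) W = (\<Sum>i<n. \<Sum>j<n. of_real a * (X i j * cnj (W i j)) + (if i = j then of_real (b - a) * trn n X / of_nat n else 0) * cnj (W i j))"
    unfolding SS_def block_entries[OF n X] by (intro sum.cong refl) (auto simp: algebra_simps)
  also have "\<dots> = of_real a * SS n X W + of_real (b - a) * trn n X / of_nat n * cnj (trn n W)"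
    unfolding SS_def trn_def by (simp add: sum.distrib sum_distrib_left sum_delta_l cnj_sum del: sum_divide_distrib)
  finally show ?thesis .
qed

lemma SB_block: assumes n: "n \<ge> 1" and X: "X \<in> sl (n+1)"
  shows "SB n (block_op n a b c X) W = of_real c * SB n X W"
  unfolding SB_def block_entries[OF n X] by (simp add: sum_distrib_left algebra_simps)

lemma Gf_block: assumes n: "n \<ge> 1" and X: "X \<in> sl (n+1)"
  shows "Gf n x y z (block_op n a b c X) W = of_real (a/x) * (SS n X W - trn n X * cnj (trn n W) / of_nat n)
     + of_real ((real n + 1) * b / (real n * y)) * (trn n X * cnj (trn n W)) + of_real (c/z) * SB n X W"
proof -
  have nz: "(of_nat n :: complex) \<noteq> 0" using n by simp
  have h: "of_real a * SS n X W + of_real (b - a) * trn n X / of_nat n * cnj (trn n W) - of_real b * trn n X * cnj (trn n W) / of_nat n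
     = of_real a * (SS n X W - trn n X * cnj (trn n W) / of_nat n)"
    using nz by (simp add: field_simps)
  show ?thesis unfolding Gf_def SS_block[OF n X] SB_block[OF n X] trn_block[OF n X] h
    by (simp add: algebra_simps)
qed

lemma Gf_block_herm: assumes n: "n \<ge> 1" and X: "X \<in> sl (n+1)" and W: "W \<in> sl (n+1)"
  shows "Gf n x y z (block_op n a b c X) W = Gf n x y z X (block_op n a b c W)"
  apply (subst (2) Gf_herm)
  unfolding Gf_block[OF n X] Gf_block[OF n W] SS_def SB_def
  by (simp add: algebra_simps)


definition Em :: "nat \<Rightarrow> nat \<Rightarrow> cmat" where "Em p q = (\<lambda>i j. if i = p \<and> j = q then 1 else 0)"
definition dg :: "(nat \<Rightarrow> complex) \<Rightarrow> cmat" where "dg d = (\<lambda>i j. if i = j then d i else 0)"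
definition idn :: "nat \<Rightarrow> cmat" where "idn n = dg (\<lambda>i. if i < n then 1 else 0)"

lemma comm_msc_l: "comm N (msc a A) B = msc a (comm N A B)"
  unfolding comm_def msc_def by (simp add: sum_distrib_left algebra_simps)
lemma comm_msc_r: "comm N A (msc a B) = msc a (comm N A B)"
  unfolding comm_def msc_def by (simp add: sum_distrib_left algebra_simps)
lemma comm_madd_l: "comm N (madd A A') B = madd (comm N A B) (comm N A' B)"
  unfolding comm_def madd_def by (simp add: sum.distrib algebra_simps)
lemma comm_madd_r: "comm N A (madd B B') = madd (comm N A B) (comm N A B')"
  unfolding comm_def madd_def by (simp add: sum.distrib algebra_simps)
lemma comm_anti: "comm N A B = msc (-1) (comm N B A)"
  unfolding comm_def msc_def by simp

lemma comm_EE: "p < N \<Longrightarrow> q < N \<Longrightarrow> r < N \<Longrightarrow> s < N \<Longrightarrow>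
  comm N (Em p q) (Em r s) = madd (msc (if q = r then 1 else 0) (Em p s)) (msc (- (if s = p then 1 else 0)) (Em r q))"
  unfolding comm_def Em_def madd_def msc_def
  by (intro ext) (simp add: if_distrib[of "\<lambda>u. u * _"] sum.delta cong: if_cong)

lemma comm_dE: "r < N \<Longrightarrow> s < N \<Longrightarrow> comm N (dg d) (Em r s) = msc (d r - d s) (Em r s)"
  unfolding comm_def Em_def dg_def msc_def
  by (intro ext) (simp add: if_distrib[of "\<lambda>u. u * _"] if_distrib[of "\<lambda>u. _ * u"] sum.delta algebra_simps cong: if_cong)

lemma comm_Ed: "r < N \<Longrightarrow> s < N \<Longrightarrow> comm N (Em r s) (dg d) = msc (d s - d r) (Em r s)"
  unfolding comm_def Em_def dg_def msc_def
  by (intro ext) (simp add: if_distrib[of "\<lambda>u. u * _"] if_distrib[of "\<lambda>u. _ * u"] sum.delta algebra_simps cong: if_cong)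

lemma comm_dd: "comm N (dg d) (dg d') = msc 0 (dg d)"
  unfolding comm_def dg_def msc_def
  by (intro ext) (simp add: if_distrib[of "\<lambda>u. u * _"] if_distrib[of "\<lambda>u. _ * u"] sum.delta algebra_simps cong: if_cong)

lemma Gf_madd: "Gf n x y z (madd A B) W = Gf n x y z A W + Gf n x y z B W"
  using Gf_ms[of n x y z 1 A 1 B W] by (simp add: madd_def msc_def)

lemma Gf_msc: "Gf n x y z (msc a A) W = a * Gf n x y z A W"
  using Gf_ms[of n x y z a A 0 A W] by (simp add: madd_def msc_def)

lemma Imat_dg: "Imat n = dg (\<lambda>i. if i < n then of_real (sq n) else if i = n then - of_nat n * of_real (sq n) else 0)"
  unfolding dg_def by (intro ext) (simp add: Imat_diag)

lemma Em_mult: "Em p q i j * c = (if i = p then (if j = q then c else 0) else 0)"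
  unfolding Em_def by simp

lemma sum_ifP: "(\<Sum>j\<in>A. if P then f j else 0) = (if P then sum f A else (0::complex))"
  by simp

lemma SS_Em: "SS n (Em p q) W = (if p < n \<and> q < n then cnj (W p q) else 0)"
  unfolding SS_def Em_mult by (simp add: sum.delta sum.delta' sum_ifP cong: if_cong)
lemma trn_Em: "trn n (Em p q) = (if p = q \<and> p < n then 1 else 0)"
  unfolding trn_def Em_def by (cases "p = q") (auto simp: sum.delta intro!: sum.neutral)
lemma SB_Em: "SB n (Em p q) W = (if p < n \<and> q = n then cnj (W p n) else if p = n \<and> q < n then cnj (W n q) else 0)"
  unfolding SB_def Em_mult by (auto simp: sum.distrib sum.delta sum.delta' sum_ifP)

lemma Gf_Em: "p < n + 1 \<Longrightarrow> q < n + 1 \<Longrightarrow> Gf n x y z (Em p q) W =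
   (if p < n \<and> q < n then of_real (1/x) * (cnj (W p q) - (if p = q then cnj (trn n W) / of_nat n else 0))
       + (if p = q then of_real ((real n + 1)/(real n * y)) * cnj (trn n W) else 0)
    else if p < n \<and> q = n then of_real (1/z) * cnj (W p n)
    else if p = n \<and> q < n then of_real (1/z) * cnj (W n q) else 0)"
  unfolding Gf_def SS_Em trn_Em SB_Em by auto

lemma Gf_idn: assumes n: "n \<ge> 1" shows "Gf n x y z (idn n) W = of_real ((real n + 1)/(real n * y)) * of_nat n * cnj (trn n W)"
proof -
  have "SS n (idn n) W = cnj (trn n W)" unfolding SS_def idn_def dg_def trn_def
    by (simp add: if_distrib[of "\<lambda>u. u * _"] sum.delta cnj_sum cong: if_cong)
  moreover have "trn n (idn n) = of_nat n" unfolding trn_def idn_def dg_def by simp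
  moreover have "SB n (idn n) W = 0" unfolding SB_def idn_def dg_def by simp
  ultimately show ?thesis unfolding Gf_def using n by simp
qed


datatype fidx = FK nat nat | FI | FS1 nat | FS2 nat

definition Lset :: "nat \<Rightarrow> fidx set" where
  "Lset n = (\<lambda>(p,q). FK p q) ` ({..<n}\<times>{..<n}) \<union> {FI} \<union> FS1 ` {..<n} \<union> FS2 ` {..<n}"

lemma finite_Lset: "finite (Lset n)" unfolding Lset_def by auto

lemma sum_Lset: "(\<Sum>l\<in>Lset n. F l) = (\<Sum>p<n. \<Sum>q<n. F (FK p q)) + F FI + (\<Sum>p<n. F (FS1 p)) + (\<Sum>p<n. F (FS2 p))"
proof -
  let ?A = "(\<lambda>(p,q). FK p q) ` ({..<n}\<times>{..<n})"
  have i1: "inj_on (\<lambda>(p,q). FK p q) ({..<n}\<times>{..<n})" by (auto simp: inj_on_def)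
  have i2: "inj_on FS1 {..<n}" "inj_on FS2 {..<n}" by (auto simp: inj_on_def)
  have "(\<Sum>l\<in>Lset n. F l) = sum F (?A \<union> {FI} \<union> FS1 ` {..<n}) + sum F (FS2 ` {..<n})"
    unfolding Lset_def by (rule sum.union_disjoint) auto
  also have "sum F (?A \<union> {FI} \<union> FS1 ` {..<n}) = sum F (?A \<union> {FI}) + sum F (FS1 ` {..<n})"
    by (rule sum.union_disjoint) auto
  also have "sum F (?A \<union> {FI}) = sum F ?A + F FI"
    by (subst sum.union_disjoint) auto
  also have "sum F ?A = (\<Sum>(p,q)\<in>{..<n}\<times>{..<n}. F (FK p q))"
    by (subst sum.reindex[OF i1]) (simp add: case_prod_unfold)
  also have "\<dots> = (\<Sum>p<n. \<Sum>q<n. F (FK p q))" by (simp add: sum.cartesian_product)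
  also have "sum F (FS1 ` {..<n}) = (\<Sum>p<n. F (FS1 p))" by (simp add: sum.reindex[OF i2(1)])
  also have "sum F (FS2 ` {..<n}) = (\<Sum>p<n. F (FS2 p))" by (simp add: sum.reindex[OF i2(2)])
  finally show ?thesis .
qed

fun fb :: "nat \<Rightarrow> real \<Rightarrow> real \<Rightarrow> real \<Rightarrow> fidx \<Rightarrow> cmat" where
  "fb n x y z (FK p q) = msc (of_real (sqrt x)) (madd (Em p q) (msc (- (if p = q then 1 / of_nat n else 0)) (idn n)))"
| "fb n x y z FI = msc (of_real (sqrt y)) (Imat n)"
| "fb n x y z (FS1 p) = msc (of_real (sqrt z)) (Em p n)"
| "fb n x y z (FS2 p) = msc (of_real (sqrt z)) (Em n p)"

lemma sl_iff: "M \<in> sl (n+1) \<longleftrightarrow> M \<in> mat_space (n+1) \<and> trn n M + M n n = 0"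
  unfolding sl_def trn_def sum_upto_Suc by simp

lemma Imat_split: "Imat n = madd (msc (of_real (sq n)) (idn n)) (msc (- of_nat n * of_real (sq n)) (Em n n))"
  unfolding Imat_diag madd_def msc_def idn_def dg_def Em_def by (intro ext) auto

lemma trn_msc: "trn n (msc a A) = a * trn n A" unfolding trn_def msc_def by (simp add: sum_distrib_left)
lemma trn_madd: "trn n (madd A B) = trn n A + trn n B" unfolding trn_def madd_def by (simp add: sum.distrib)
lemma trn_idn: "trn n (idn n) = of_nat n" unfolding trn_def idn_def dg_def by simp

lemma fb_in: assumes n: "n \<ge> 1" and l: "l \<in> Lset n" shows "fb n x y z l \<in> sl (n+1)"
proof -
  have nz: "(of_nat n :: complex) \<noteq> 0" using n by simp
  from l consider (K) p q where "l = FK p q" "p < n" "q < n" | (I) "l = FI" | (S1) p where "l = FS1 p" "p < n"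
    | (S2) p where "l = FS2 p" "p < n" unfolding Lset_def by auto
  thus ?thesis
  proof cases
    case K
    have "trn n (fb n x y z l) = of_real (sqrt x) * ((if p = q \<and> p < n then 1 else 0) - (if p = q then 1 / of_nat n else 0) * of_nat n)"
      unfolding K(1) by (simp add: trn_msc trn_madd trn_Em trn_idn)
    also have "\<dots> = 0" using K(2,3) nz by auto
    finally show ?thesis unfolding sl_iff K(1) using K(2,3)
      by (auto simp: mat_space_def msc_def madd_def Em_def idn_def dg_def)
  next
    case I
    show ?thesis unfolding sl_iff I using n
      by (auto simp: mat_space_def trn_def msc_def Imat_def)
  next
    case S1
    show ?thesis unfolding sl_iff S1(1) using S1(2)
      by (auto simp: mat_space_def trn_def msc_def Em_def)
  next
    case S2
    show ?thesis unfolding sl_iff S2(1) using S2(2)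
      by (auto simp: mat_space_def trn_def msc_def Em_def)
  qed
qed

lemma Gf_fbK: assumes n: "n \<ge> 1" and p: "p < n" and q: "q < n" and x: "x > 0" and y: "y > 0"
  shows "Gf n x y z (fb n x y z (FK p q)) w = of_real (sqrt x / x) * (cnj (w p q) - (if p = q then cnj (trn n w) / of_nat n else 0))"
proof -
  have nz: "(of_nat n :: complex) \<noteq> 0" using n by simp
  have yz: "(of_real y :: complex) \<noteq> 0" using y by simp
  show ?thesis using p q nz yz
    by (simp add: Gf_msc Gf_madd Gf_Em Gf_idn[OF n] field_simps)
qed

lemma Gf_Enn: "Gf n x y z (Em n n) w = 0"
  by (simp add: Gf_def SS_Em trn_Em SB_Em)

lemma Gf_fbI: assumes n: "n \<ge> 1" and y: "y > 0"
  shows "Gf n x y z (fb n x y z FI) w = of_real (sqrt y * sq n * (real n + 1) / y) * cnj (trn n w)"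
proof -
  have nz: "(of_nat n :: complex) \<noteq> 0" using n by simp
  have yz: "(of_real y :: complex) \<noteq> 0" using y by simp
  show ?thesis unfolding fb.simps Imat_split using nz yz
    by (simp add: Gf_msc Gf_madd Gf_idn[OF n] Gf_Enn field_simps)
qed

lemma Gf_fbS1: "p < n \<Longrightarrow> Gf n x y z (fb n x y z (FS1 p)) w = of_real (sqrt z / z) * cnj (w p n)"
  by (simp add: Gf_msc Gf_Em)
lemma Gf_fbS2: "p < n \<Longrightarrow> Gf n x y z (fb n x y z (FS2 p)) w = of_real (sqrt z / z) * cnj (w n p)"
  by (simp add: Gf_msc Gf_Em)

lemma frame_identity:
  assumes n: "n \<ge> 1" and x: "x > 0" and y: "y > 0" and z: "z > 0"
  shows "Gf n x y z w w = of_real (\<Sum>l\<in>Lset n. (cmod (Gf n x y z (fb n x y z l) w))\<^sup>2)"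
proof -
  have nz: "real n \<noteq> 0" using n by simp
  have k1: "\<And>p q. p < n \<Longrightarrow> q < n \<Longrightarrow> (cmod (Gf n x y z (fb n x y z (FK p q)) w))\<^sup>2
      = (1/x) * (cmod (w p q - (if p = q then trn n w / of_nat n else 0)))\<^sup>2"
  proof -
    fix p q assume p: "p < n" and q: "q < n"
    have "cnj (w p q) - (if p = q then cnj (trn n w) / of_nat n else 0) = cnj (w p q - (if p = q then trn n w / of_nat n else 0))"
      by simp
    hence "cmod (Gf n x y z (fb n x y z (FK p q)) w) = (sqrt x / x) * cmod (w p q - (if p = q then trn n w / of_nat n else 0))"
      unfolding Gf_fbK[OF n p q x y] norm_mult using x by (simp only: complex_mod_cnj norm_of_real) simp
    hence "(cmod (Gf n x y z (fb n x y z (FK p q)) w))\<^sup>2 = (sqrt x / x)\<^sup>2 * (cmod (w p q - (if p = q then trn n w / of_nat n else 0)))\<^sup>2"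
      by (simp only: power_mult_distrib)
    moreover have "(sqrt x / x)\<^sup>2 = 1 / x" using x by (simp add: power_divide power2_eq_square)
    ultimately show "(cmod (Gf n x y z (fb n x y z (FK p q)) w))\<^sup>2 = (1/x) * (cmod (w p q - (if p = q then trn n w / of_nat n else 0)))\<^sup>2"
      by simp
  qed
  have k2: "(cmod (Gf n x y z (fb n x y z FI) w))\<^sup>2 = ((real n + 1)/(real n * y)) * (cmod (trn n w))\<^sup>2"
  proof -
    have "(cmod (Gf n x y z (fb n x y z FI) w))\<^sup>2 = (sqrt y * sq n * (real n + 1) / y)\<^sup>2 * (cmod (trn n w))\<^sup>2"
      unfolding Gf_fbI[OF n y] norm_mult complex_mod_cnj norm_of_real by (simp add: power_mult_distrib power_divide power2_abs)
    also have "(sqrt y * sq n * (real n + 1) / y)\<^sup>2 = (sqrt y)\<^sup>2 * (sq n * sq n) * (real n + 1)^2 / y^2"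
      by (simp add: power_mult_distrib power_divide power2_eq_square)
    also have "\<dots> = y * (sq n * sq n) * (real n + 1)^2 / y^2" using y by simp
    also have "\<dots> = (real n + 1)/(real n * y)" unfolding sq_sq[OF n]
    proof -
      have p: "real n + 1 > 0" "real n > 0" using n by auto
      have "y * (1 / (real n * (real n + 1))) * (real n + 1)^2 / y^2 = ((real n + 1) * (real n + 1)) / (real n * (real n + 1)) * (y / (y * y))"
        by (simp add: power2_eq_square)
      also have "\<dots> = (real n + 1) / real n * (1 / y)" using p y by simp
      finally show "y * (1 / (real n * (real n + 1))) * (real n + 1)^2 / y^2 = (real n + 1)/(real n * y)" by simp
    qed
    finally show ?thesis .
  qed
  have sz: "(sqrt z / z)\<^sup>2 = 1 / z" using z by (simp add: power_divide power2_eq_square)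
  have k3: "(cmod (Gf n x y z (fb n x y z (FS1 p)) w))\<^sup>2 = (1/z) * (cmod (w p n))\<^sup>2" if p: "p < n" for p
  proof -
    have h: "cmod (Gf n x y z (fb n x y z (FS1 p)) w) = (sqrt z / z) * cmod (w p n)"
      unfolding Gf_fbS1[OF p] norm_mult norm_of_real complex_mod_cnj using z by simp
    show ?thesis unfolding h power_mult_distrib sz by simp
  qed
  have k4: "(cmod (Gf n x y z (fb n x y z (FS2 p)) w))\<^sup>2 = (1/z) * (cmod (w n p))\<^sup>2" if p: "p < n" for p
  proof -
    have h: "cmod (Gf n x y z (fb n x y z (FS2 p)) w) = (sqrt z / z) * cmod (w n p)"
      unfolding Gf_fbS2[OF p] norm_mult norm_of_real complex_mod_cnj using z by simp
    show ?thesis unfolding h power_mult_distrib sz by simp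
  qed
  have "(\<Sum>l\<in>Lset n. (cmod (Gf n x y z (fb n x y z l) w))\<^sup>2) =
     (1/x) * (\<Sum>i<n. \<Sum>j<n. (cmod (w i j - (if i = j then trn n w / of_nat n else 0)))\<^sup>2)
     + ((real n + 1)/(real n * y)) * (cmod (trn n w))\<^sup>2
     + (1/z) * (\<Sum>i<n. (cmod (w i n))\<^sup>2 + (cmod (w n i))\<^sup>2)"
    unfolding sum_Lset by (simp add: k1 k2 k3 k4 sum_distrib_left sum.distrib distrib_left del: fb.simps)
  thus ?thesis unfolding Gf_self by simp
qed


lemmas fvsimps = comm_msc_l comm_msc_r comm_madd_l comm_madd_r comm_EE comm_dE comm_Ed comm_dd idn_def Imat_dg
  Gf_madd Gf_msc

abbreviation "YY n x y z X p q \<equiv> Gf n x y z (Em p q) X"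

lemma fv_KK: assumes "p < n" "q < n" "r < n" "s < n"
  shows "Gf n x y z (comm (n+1) (fb n x y z (FK p q)) (fb n x y z (FK r s))) X =
    of_real (sqrt x) * of_real (sqrt x) * ((if q = r then YY n x y z X p s else 0) - (if s = p then YY n x y z X r q else 0))"
  using assms by (simp add: fvsimps)

lemma fv_KI: assumes "p < n" "q < n"
  shows "Gf n x y z (comm (n+1) (fb n x y z (FK p q)) (fb n x y z FI)) X = 0"
  using assms by (simp add: fvsimps)

lemma fv_KS1: assumes "p < n" "q < n" "r < n"
  shows "Gf n x y z (comm (n+1) (fb n x y z (FK p q)) (fb n x y z (FS1 r))) X =
   of_real (sqrt x) * of_real (sqrt z) * ((if q = r then YY n x y z X p n else 0) - (if p = q then YY n x y z X r n / of_nat n else 0))"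
  using assms by (simp add: fvsimps)

lemma fv_KS2: assumes "p < n" "q < n" "r < n"
  shows "Gf n x y z (comm (n+1) (fb n x y z (FK p q)) (fb n x y z (FS2 r))) X =
   of_real (sqrt x) * of_real (sqrt z) * ((if p = q then YY n x y z X n r / of_nat n else 0) - (if r = p then YY n x y z X n q else 0))"
  using assms by (simp add: fvsimps)

lemma fv_II: "Gf n x y z (comm (n+1) (fb n x y z FI) (fb n x y z FI)) X = 0"
  by (simp add: fvsimps)

lemma fv_IS1: assumes "r < n"
  shows "Gf n x y z (comm (n+1) (fb n x y z FI) (fb n x y z (FS1 r))) X =
    of_real (sqrt y) * of_real (sqrt z) * (of_real (sq n) * (of_nat n + 1)) * YY n x y z X r n"
  using assms by (simp add: fvsimps) (simp add: algebra_simps)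

lemma fv_IS2: assumes "r < n"
  shows "Gf n x y z (comm (n+1) (fb n x y z FI) (fb n x y z (FS2 r))) X =
    - of_real (sqrt y) * of_real (sqrt z) * (of_real (sq n) * (of_nat n + 1)) * YY n x y z X n r"
  using assms by (simp add: fvsimps) (simp add: algebra_simps)

lemma fv_S1S1: assumes "p < n" "r < n"
  shows "Gf n x y z (comm (n+1) (fb n x y z (FS1 p)) (fb n x y z (FS1 r))) X = 0"
  using assms by (simp add: fvsimps)

lemma fv_S2S2: assumes "p < n" "r < n"
  shows "Gf n x y z (comm (n+1) (fb n x y z (FS2 p)) (fb n x y z (FS2 r))) X = 0"
  using assms by (simp add: fvsimps)

lemma fv_S1S2: assumes "p < n" "r < n"
  shows "Gf n x y z (comm (n+1) (fb n x y z (FS1 p)) (fb n x y z (FS2 r))) X =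
    of_real (sqrt z) * of_real (sqrt z) * YY n x y z X p r"
  using assms by (simp add: fvsimps Gf_Enn)


lemma D2:
  fixes a b :: "nat \<Rightarrow> complex"
  assumes p: "p < n" and q: "q < n"
  shows "(\<Sum>r<n. \<Sum>s<n. ((if q = r then a s else 0) - (if s = p then b r else 0)) * cnj ((if q = r then a s else 0) - (if s = p then b r else 0)))
    = (\<Sum>s<n. a s * cnj (a s)) + (\<Sum>r<n. b r * cnj (b r)) - (a p * cnj (b q) + b q * cnj (a p))"
proof -
  have e: "\<And>r s. ((if q = r then a s else 0) - (if s = p then b r else 0)) * cnj ((if q = r then a s else 0) - (if s = p then b r else 0))
     = (if q = r then a s * cnj (a s) else 0) + (if s = p then b r * cnj (b r) else 0)
       - (if q = r then (if s = p then a s * cnj (b r) + b r * cnj (a s) else 0) else 0)"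
    by (auto simp: algebra_simps)
  show ?thesis unfolding e using p q
    by (simp add: sum.distrib sum_subtractf sum_ifP sum.delta sum.delta')
qed

lemma D1:
  fixes \<beta> :: "nat \<Rightarrow> complex"
  assumes q: "q < n"
  shows "(\<Sum>r<n. ((if q = r then \<alpha> else 0) - \<beta> r) * cnj ((if q = r then \<alpha> else 0) - \<beta> r))
    = \<alpha> * cnj \<alpha> + (\<Sum>r<n. \<beta> r * cnj (\<beta> r)) - (\<alpha> * cnj (\<beta> q) + \<beta> q * cnj \<alpha>)"
proof -
  have e: "\<And>r. ((if q = r then \<alpha> else 0) - \<beta> r) * cnj ((if q = r then \<alpha> else 0) - \<beta> r)
     = (if q = r then \<alpha> * cnj \<alpha> - (\<alpha> * cnj (\<beta> r) + \<beta> r * cnj \<alpha>) else 0) + \<beta> r * cnj (\<beta> r)"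
    by (auto simp: algebra_simps)
  show ?thesis unfolding e using q
    by (simp add: sum.distrib sum.delta sum.delta')
qed

lemma sqc: assumes "x \<ge> 0" shows "complex_of_real (sqrt x) * complex_of_real (sqrt x) = complex_of_real x"
proof -
  have "of_real (sqrt x) * of_real (sqrt x) = (of_real (sqrt x * sqrt x) :: complex)" by (simp only: of_real_mult)
  also have "sqrt x * sqrt x = x" using assms by simp
  finally show ?thesis .
qed

lemma nsq2: assumes x: "x \<ge> 0" and z: "z \<ge> 0"
  shows "(of_real (sqrt x) * of_real (sqrt z) * w) * cnj (of_real (sqrt x) * of_real (sqrt z) * w) = of_real x * of_real z * (w * cnj (w::complex))"
proof -
  have "(of_real (sqrt x) * of_real (sqrt z) * w) * cnj (of_real (sqrt x) * of_real (sqrt z) * w)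
      = (of_real (sqrt x) * of_real (sqrt x)) * (of_real (sqrt z) * of_real (sqrt z)) * (w * cnj w)" by (simp add: mult_ac)
  thus ?thesis unfolding sqc[OF x] sqc[OF z] .
qed

context
  fixes n :: nat and x y z :: real and X :: cmat
  assumes n: "n \<ge> 1" and x: "x > 0" and y: "y > 0" and z: "z > 0"
begin

definition "SY = (\<Sum>p<n. \<Sum>s<n. YY n x y z X p s * cnj (YY n x y z X p s))"
definition "TY = (\<Sum>p<n. YY n x y z X p p)"
definition "C1 = (\<Sum>r<n. YY n x y z X r n * cnj (YY n x y z X r n))"
definition "C2 = (\<Sum>r<n. YY n x y z X n r * cnj (YY n x y z X n r))"

abbreviation "FV k l \<equiv> Gf n x y z (comm (n+1) (fb n x y z k) (fb n x y z l)) X"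

lemma BKK: "(\<Sum>p<n. \<Sum>q<n. \<Sum>r<n. \<Sum>s<n. FV (FK p q) (FK r s) * cnj (FV (FK p q) (FK r s)))
   = of_real (x * x) * (2 * of_nat n * SY - 2 * (TY * cnj TY))"
proof -
  let ?Y = "YY n x y z X"
  have "(\<Sum>p<n. \<Sum>q<n. \<Sum>r<n. \<Sum>s<n. FV (FK p q) (FK r s) * cnj (FV (FK p q) (FK r s)))
     = (\<Sum>p<n. \<Sum>q<n. of_real (x * x) * ((\<Sum>s<n. ?Y p s * cnj (?Y p s)) + (\<Sum>r<n. ?Y r q * cnj (?Y r q)) - (?Y p p * cnj (?Y q q) + ?Y q q * cnj (?Y p p))))"
  proof (intro sum.cong refl)
    fix p q assume p: "p \<in> {..<n}" and q: "q \<in> {..<n}"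
    have "(\<Sum>r<n. \<Sum>s<n. FV (FK p q) (FK r s) * cnj (FV (FK p q) (FK r s)))
       = (\<Sum>r<n. \<Sum>s<n. of_real (x * x) * (((if q = r then ?Y p s else 0) - (if s = p then ?Y r q else 0)) * cnj ((if q = r then ?Y p s else 0) - (if s = p then ?Y r q else 0))))"
    proof (intro sum.cong refl)
      fix r s assume r: "r \<in> {..<n}" and s: "s \<in> {..<n}"
      show "FV (FK p q) (FK r s) * cnj (FV (FK p q) (FK r s)) = of_real (x * x) * (((if q = r then ?Y p s else 0) - (if s = p then ?Y r q else 0)) * cnj ((if q = r then ?Y p s else 0) - (if s = p then ?Y r q else 0)))"
        unfolding fv_KK[OF p[simplified] q[simplified] r[simplified] s[simplified]] nsq2[OF less_imp_le[OF x] less_imp_le[OF x]] by simp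
    qed
    also have "\<dots> = of_real (x * x) * (\<Sum>r<n. \<Sum>s<n. ((if q = r then ?Y p s else 0) - (if s = p then ?Y r q else 0)) * cnj ((if q = r then ?Y p s else 0) - (if s = p then ?Y r q else 0)))"
      by (simp add: sum_distrib_left)
    also have "\<dots> = of_real (x * x) * ((\<Sum>s<n. ?Y p s * cnj (?Y p s)) + (\<Sum>r<n. ?Y r q * cnj (?Y r q)) - (?Y p p * cnj (?Y q q) + ?Y q q * cnj (?Y p p)))"
      using D2[of p n q "\<lambda>s. ?Y p s" "\<lambda>r. ?Y r q"] p q by simp
    finally show "(\<Sum>r<n. \<Sum>s<n. FV (FK p q) (FK r s) * cnj (FV (FK p q) (FK r s))) = \<dots>" .
  qed
  also have "\<dots> = of_real (x * x) * ((\<Sum>p<n. \<Sum>q<n. (\<Sum>s<n. ?Y p s * cnj (?Y p s))) + (\<Sum>p<n. \<Sum>q<n. (\<Sum>r<n. ?Y r q * cnj (?Y r q)))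
      - ((\<Sum>p<n. \<Sum>q<n. ?Y p p * cnj (?Y q q)) + (\<Sum>p<n. \<Sum>q<n. ?Y q q * cnj (?Y p p))))"
    by (simp only: sum_distrib_left[symmetric] sum.distrib sum_subtractf)
  also have "(\<Sum>p<n. \<Sum>q<n. (\<Sum>s<n. ?Y p s * cnj (?Y p s))) = of_nat n * SY"
    unfolding SY_def by (simp add: sum_distrib_left)
  also have "(\<Sum>p<n. \<Sum>q<n. (\<Sum>r<n. ?Y r q * cnj (?Y r q))) = of_nat n * SY"
    unfolding SY_def by (simp add: sum_distrib_left sum.swap[of "\<lambda>r q. ?Y r q * cnj (?Y r q)"])
  also have "(\<Sum>p<n. \<Sum>q<n. ?Y p p * cnj (?Y q q)) = TY * cnj TY"
    unfolding TY_def cnj_sum sum_product ..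
  also have "(\<Sum>p<n. \<Sum>q<n. ?Y q q * cnj (?Y p p)) = TY * cnj TY"
    unfolding TY_def cnj_sum sum_product by (rule sum.swap)
  finally show ?thesis by (simp add: algebra_simps)
qed

lemma BKS1: "(\<Sum>p<n. \<Sum>q<n. \<Sum>r<n. FV (FK p q) (FS1 r) * cnj (FV (FK p q) (FS1 r)))
   = of_real (x * z) * ((of_nat n - 1 / of_nat n) * C1)"
proof -
  let ?Y = "YY n x y z X"
  have nz: "(of_nat n :: complex) \<noteq> 0" using n by simp
  have "(\<Sum>p<n. \<Sum>q<n. \<Sum>r<n. FV (FK p q) (FS1 r) * cnj (FV (FK p q) (FS1 r)))
     = (\<Sum>p<n. \<Sum>q<n. of_real (x * z) * (?Y p n * cnj (?Y p n) + (if p = q then C1 / (of_nat n * of_nat n) - 2 * (?Y p n * cnj (?Y p n)) / of_nat n else 0)))"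
  proof (intro sum.cong refl)
    fix p q assume p: "p \<in> {..<n}" and q: "q \<in> {..<n}"
    let ?\<beta> = "\<lambda>r. if p = q then ?Y r n / of_nat n else 0"
    have "(\<Sum>r<n. FV (FK p q) (FS1 r) * cnj (FV (FK p q) (FS1 r)))
       = (\<Sum>r<n. of_real (x * z) * (((if q = r then ?Y p n else 0) - ?\<beta> r) * cnj ((if q = r then ?Y p n else 0) - ?\<beta> r)))"
    proof (intro sum.cong refl)
      fix r assume r: "r \<in> {..<n}"
      show "FV (FK p q) (FS1 r) * cnj (FV (FK p q) (FS1 r)) = of_real (x * z) * (((if q = r then ?Y p n else 0) - ?\<beta> r) * cnj ((if q = r then ?Y p n else 0) - ?\<beta> r))"
        unfolding fv_KS1[OF p[simplified] q[simplified] r[simplified]] nsq2[OF less_imp_le[OF x] less_imp_le[OF z]] by simp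
    qed
    also have "\<dots> = of_real (x * z) * (\<Sum>r<n. ((if q = r then ?Y p n else 0) - ?\<beta> r) * cnj ((if q = r then ?Y p n else 0) - ?\<beta> r))"
      by (simp add: sum_distrib_left)
    also have "\<dots> = of_real (x * z) * (?Y p n * cnj (?Y p n) + (\<Sum>r<n. ?\<beta> r * cnj (?\<beta> r)) - (?Y p n * cnj (?\<beta> q) + ?\<beta> q * cnj (?Y p n)))"
      using D1[of q n "?Y p n" ?\<beta>] q by simp
    also have "\<dots> = of_real (x * z) * (?Y p n * cnj (?Y p n) + (if p = q then C1 / (of_nat n * of_nat n) - 2 * (?Y p n * cnj (?Y p n)) / of_nat n else 0))"
      unfolding C1_def by (cases "p = q") (simp_all add: sum_divide_distrib[symmetric] algebra_simps)
    finally show "(\<Sum>r<n. FV (FK p q) (FS1 r) * cnj (FV (FK p q) (FS1 r))) = \<dots>" .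
  qed
  also have "\<dots> = of_real (x * z) * (of_nat n * C1 + (of_nat n * (C1 / (of_nat n * of_nat n)) - 2 * C1 / of_nat n))"
    unfolding C1_def
    by (simp add: sum_distrib_left[symmetric] sum.distrib sum.delta sum.delta' sum_subtractf sum_divide_distrib[symmetric])
  also have "\<dots> = of_real (x * z) * ((of_nat n - 1 / of_nat n) * C1)"
    using nz by (simp add: field_simps)
  finally show ?thesis .
qed

lemma BKS2: "(\<Sum>p<n. \<Sum>q<n. \<Sum>r<n. FV (FK p q) (FS2 r) * cnj (FV (FK p q) (FS2 r)))
   = of_real (x * z) * ((of_nat n - 1 / of_nat n) * C2)"
proof -
  let ?Y = "YY n x y z X"
  have nz: "(of_nat n :: complex) \<noteq> 0" using n by simp
  have "(\<Sum>p<n. \<Sum>q<n. \<Sum>r<n. FV (FK p q) (FS2 r) * cnj (FV (FK p q) (FS2 r)))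
     = (\<Sum>p<n. \<Sum>q<n. of_real (x * z) * (?Y n q * cnj (?Y n q) + (if p = q then C2 / (of_nat n * of_nat n) - 2 * (?Y n q * cnj (?Y n q)) / of_nat n else 0)))"
  proof (intro sum.cong refl)
    fix p q assume p: "p \<in> {..<n}" and q: "q \<in> {..<n}"
    let ?\<beta> = "\<lambda>r. if p = q then ?Y n r / of_nat n else 0"
    have "(\<Sum>r<n. FV (FK p q) (FS2 r) * cnj (FV (FK p q) (FS2 r)))
       = (\<Sum>r<n. of_real (x * z) * (((if p = r then ?Y n q else 0) - ?\<beta> r) * cnj ((if p = r then ?Y n q else 0) - ?\<beta> r)))"
    proof (intro sum.cong refl)
      fix r assume r: "r \<in> {..<n}"
      have m: "((if p = q then ?Y n r / of_nat n else 0) - (if r = p then ?Y n q else 0)) * cnj ((if p = q then ?Y n r / of_nat n else 0) - (if r = p then ?Y n q else 0))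
        = ((if p = r then ?Y n q else 0) - ?\<beta> r) * cnj ((if p = r then ?Y n q else 0) - ?\<beta> r)"
        by (auto simp: algebra_simps)
      show "FV (FK p q) (FS2 r) * cnj (FV (FK p q) (FS2 r)) = of_real (x * z) * (((if p = r then ?Y n q else 0) - ?\<beta> r) * cnj ((if p = r then ?Y n q else 0) - ?\<beta> r))"
        unfolding fv_KS2[OF p[simplified] q[simplified] r[simplified]] nsq2[OF less_imp_le[OF x] less_imp_le[OF z]] m by simp
    qed
    also have "\<dots> = of_real (x * z) * (\<Sum>r<n. ((if p = r then ?Y n q else 0) - ?\<beta> r) * cnj ((if p = r then ?Y n q else 0) - ?\<beta> r))"
      by (simp add: sum_distrib_left)
    also have "\<dots> = of_real (x * z) * (?Y n q * cnj (?Y n q) + (\<Sum>r<n. ?\<beta> r * cnj (?\<beta> r)) - (?Y n q * cnj (?\<beta> p) + ?\<beta> p * cnj (?Y n q)))"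
      using D1[of p n "?Y n q" ?\<beta>] p by simp
    also have "\<dots> = of_real (x * z) * (?Y n q * cnj (?Y n q) + (if p = q then C2 / (of_nat n * of_nat n) - 2 * (?Y n q * cnj (?Y n q)) / of_nat n else 0))"
      unfolding C2_def by (cases "p = q") (simp_all add: sum_divide_distrib[symmetric] algebra_simps)
    finally show "(\<Sum>r<n. FV (FK p q) (FS2 r) * cnj (FV (FK p q) (FS2 r))) = \<dots>" .
  qed
  also have "\<dots> = of_real (x * z) * (of_nat n * C2 + (of_nat n * (C2 / (of_nat n * of_nat n)) - 2 * C2 / of_nat n))"
    unfolding C2_def
    by (simp add: sum_distrib_left[symmetric] sum.distrib sum.delta sum.delta' sum_subtractf sum_divide_distrib[symmetric])
  also have "\<dots> = of_real (x * z) * ((of_nat n - 1 / of_nat n) * C2)"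
    using nz by (simp add: field_simps)
  finally show ?thesis .
qed

lemma ssq: "(of_real (sq n) * (of_nat n + 1)) * cnj (of_real (sq n) * (of_nat n + 1)) = ((of_nat n + 1) / of_nat n :: complex)"
proof -
  have "(of_real (sq n) * (of_nat n + 1)) * cnj (of_real (sq n) * (of_nat n + 1)) = (of_real (sq n) * of_real (sq n) * (of_nat n + 1)) * (of_nat n + 1 :: complex)"
    by (simp add: algebra_simps)
  also have "\<dots> = (of_nat n + 1) / of_nat n" unfolding s2c'[OF n] by simp
  finally show ?thesis .
qed

lemma BIS1: "(\<Sum>r<n. FV FI (FS1 r) * cnj (FV FI (FS1 r))) = of_real (y * z) * ((of_nat n + 1) / of_nat n * C1)"
proof -
  let ?Y = "YY n x y z X"
  have "(\<Sum>r<n. FV FI (FS1 r) * cnj (FV FI (FS1 r))) = (\<Sum>r<n. of_real y * of_real z * ((of_nat n + 1) / of_nat n) * (?Y r n * cnj (?Y r n)))"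
  proof (intro sum.cong refl)
    fix r assume r: "r \<in> {..<n}"
    have "FV FI (FS1 r) * cnj (FV FI (FS1 r)) = of_real y * of_real z * ((of_real (sq n) * (of_nat n + 1)) * cnj (of_real (sq n) * (of_nat n + 1))) * (?Y r n * cnj (?Y r n))"
      unfolding fv_IS1[OF r[simplified]] using nsq2[OF less_imp_le[OF y] less_imp_le[OF z], of "of_real (sq n) * (of_nat n + 1) * ?Y r n"]
      by (simp add: algebra_simps)
    thus "FV FI (FS1 r) * cnj (FV FI (FS1 r)) = of_real y * of_real z * ((of_nat n + 1) / of_nat n) * (?Y r n * cnj (?Y r n))"
      unfolding ssq .
  qed
  thus ?thesis unfolding C1_def by (simp add: sum_distrib_left mult_ac)
qed

lemma BIS2: "(\<Sum>r<n. FV FI (FS2 r) * cnj (FV FI (FS2 r))) = of_real (y * z) * ((of_nat n + 1) / of_nat n * C2)"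
proof -
  let ?Y = "YY n x y z X"
  have "(\<Sum>r<n. FV FI (FS2 r) * cnj (FV FI (FS2 r))) = (\<Sum>r<n. of_real y * of_real z * ((of_nat n + 1) / of_nat n) * (?Y n r * cnj (?Y n r)))"
  proof (intro sum.cong refl)
    fix r assume r: "r \<in> {..<n}"
    have "FV FI (FS2 r) * cnj (FV FI (FS2 r)) = of_real y * of_real z * ((of_real (sq n) * (of_nat n + 1)) * cnj (of_real (sq n) * (of_nat n + 1))) * (?Y n r * cnj (?Y n r))"
      unfolding fv_IS2[OF r[simplified]] using nsq2[OF less_imp_le[OF y] less_imp_le[OF z], of "of_real (sq n) * (of_nat n + 1) * ?Y n r"]
      by (simp add: algebra_simps)
    thus "FV FI (FS2 r) * cnj (FV FI (FS2 r)) = of_real y * of_real z * ((of_nat n + 1) / of_nat n) * (?Y n r * cnj (?Y n r))"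
      unfolding ssq .
  qed
  thus ?thesis unfolding C2_def by (simp add: sum_distrib_left mult_ac)
qed

lemma BS1S2: "(\<Sum>p<n. \<Sum>r<n. FV (FS1 p) (FS2 r) * cnj (FV (FS1 p) (FS2 r))) = of_real (z * z) * SY"
proof -
  let ?Y = "YY n x y z X"
  have "(\<Sum>p<n. \<Sum>r<n. FV (FS1 p) (FS2 r) * cnj (FV (FS1 p) (FS2 r))) = (\<Sum>p<n. \<Sum>r<n. of_real (z * z) * (?Y p r * cnj (?Y p r)))"
  proof (intro sum.cong refl)
    fix p r assume p: "p \<in> {..<n}" and r: "r \<in> {..<n}"
    show "FV (FS1 p) (FS2 r) * cnj (FV (FS1 p) (FS2 r)) = of_real (z * z) * (?Y p r * cnj (?Y p r))"
      unfolding fv_S1S2[OF p[simplified] r[simplified]] nsq2[OF less_imp_le[OF z] less_imp_le[OF z]] by simp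
  qed
  thus ?thesis unfolding SY_def by (simp add: sum_distrib_left)
qed

lemma FV_anti: "FV k l = - FV l k"
  by (subst comm_anti) (simp add: Gf_msc)

lemma N_sym: "FV k l * cnj (FV k l) = FV l k * cnj (FV l k)"
  unfolding FV_anti[of k l] by simp

lemma swap3: "(\<Sum>p\<in>A. \<Sum>r\<in>B. \<Sum>s\<in>C. f p r s) = (\<Sum>r\<in>B. \<Sum>s\<in>C. \<Sum>p\<in>A. (f p r s :: complex))"
proof -
  have "(\<Sum>p\<in>A. \<Sum>r\<in>B. \<Sum>s\<in>C. f p r s) = (\<Sum>r\<in>B. \<Sum>p\<in>A. \<Sum>s\<in>C. f p r s)" by (rule sum.swap)
  also have "\<dots> = (\<Sum>r\<in>B. \<Sum>s\<in>C. \<Sum>p\<in>A. f p r s)" by (rule sum.cong[OF refl], rule sum.swap)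
  finally show ?thesis .
qed

lemma TOT: "(\<Sum>k\<in>Lset n. \<Sum>l\<in>Lset n. FV k l * cnj (FV k l)) =
   of_real (x * x) * (2 * of_nat n * SY - 2 * (TY * cnj TY))
   + 2 * (of_real (x * z) * ((of_nat n - 1 / of_nat n) * C1)) + 2 * (of_real (x * z) * ((of_nat n - 1 / of_nat n) * C2))
   + 2 * (of_real (y * z) * ((of_nat n + 1) / of_nat n * C1)) + 2 * (of_real (y * z) * ((of_nat n + 1) / of_nat n * C2))
   + 2 * (of_real (z * z) * SY)"
proof -
  let ?N = "\<lambda>k l. FV k l * cnj (FV k l)"
  have P2: "(\<Sum>p<n. \<Sum>q<n. ?N (FK p q) FI) = 0" by (simp add: fv_KI[unfolded Suc_eq_plus1[symmetric]] del: fb.simps)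
  have P5: "(\<Sum>p<n. \<Sum>q<n. ?N FI (FK p q)) = 0" by (subst N_sym) (simp add: fv_KI[unfolded Suc_eq_plus1[symmetric]] del: fb.simps)
  have P6: "?N FI FI = 0" by (simp add: fv_II[unfolded Suc_eq_plus1[symmetric]] del: fb.simps)
  have P9: "(\<Sum>p<n. \<Sum>r<n. \<Sum>s<n. ?N (FS1 p) (FK r s)) = (\<Sum>r<n. \<Sum>s<n. \<Sum>p<n. ?N (FK r s) (FS1 p))"
    by (subst N_sym) (rule swap3)
  have P10: "(\<Sum>p<n. ?N (FS1 p) FI) = (\<Sum>p<n. ?N FI (FS1 p))" by (subst N_sym) (rule refl)
  have P11: "(\<Sum>p<n. \<Sum>r<n. ?N (FS1 p) (FS1 r)) = 0" by (simp add: fv_S1S1[unfolded Suc_eq_plus1[symmetric]] del: fb.simps)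
  have P13: "(\<Sum>p<n. \<Sum>r<n. \<Sum>s<n. ?N (FS2 p) (FK r s)) = (\<Sum>r<n. \<Sum>s<n. \<Sum>p<n. ?N (FK r s) (FS2 p))"
    by (subst N_sym) (rule swap3)
  have P14: "(\<Sum>p<n. ?N (FS2 p) FI) = (\<Sum>p<n. ?N FI (FS2 p))" by (subst N_sym) (rule refl)
  have P15: "(\<Sum>p<n. \<Sum>r<n. ?N (FS2 p) (FS1 r)) = (\<Sum>p<n. \<Sum>r<n. ?N (FS1 p) (FS2 r))"
    by (subst N_sym) (rule sum.swap)
  have P16: "(\<Sum>p<n. \<Sum>r<n. ?N (FS2 p) (FS2 r)) = 0" by (simp add: fv_S2S2[unfolded Suc_eq_plus1[symmetric]] del: fb.simps)
  have "(\<Sum>k\<in>Lset n. \<Sum>l\<in>Lset n. ?N k l) =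
     (\<Sum>p<n. \<Sum>q<n. \<Sum>r<n. \<Sum>s<n. ?N (FK p q) (FK r s)) + (\<Sum>p<n. \<Sum>q<n. ?N (FK p q) FI)
       + (\<Sum>p<n. \<Sum>q<n. \<Sum>r<n. ?N (FK p q) (FS1 r)) + (\<Sum>p<n. \<Sum>q<n. \<Sum>r<n. ?N (FK p q) (FS2 r))
     + ((\<Sum>p<n. \<Sum>q<n. ?N FI (FK p q)) + ?N FI FI + (\<Sum>r<n. ?N FI (FS1 r)) + (\<Sum>r<n. ?N FI (FS2 r)))
     + ((\<Sum>p<n. \<Sum>r<n. \<Sum>s<n. ?N (FS1 p) (FK r s)) + (\<Sum>p<n. ?N (FS1 p) FI) + (\<Sum>p<n. \<Sum>r<n. ?N (FS1 p) (FS1 r)) + (\<Sum>p<n. \<Sum>r<n. ?N (FS1 p) (FS2 r)))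
     + ((\<Sum>p<n. \<Sum>r<n. \<Sum>s<n. ?N (FS2 p) (FK r s)) + (\<Sum>p<n. ?N (FS2 p) FI) + (\<Sum>p<n. \<Sum>r<n. ?N (FS2 p) (FS1 r)) + (\<Sum>p<n. \<Sum>r<n. ?N (FS2 p) (FS2 r)))"
    unfolding sum_Lset by (simp only: sum.distrib)
  also have "\<dots> = of_real (x * x) * (2 * of_nat n * SY - 2 * (TY * cnj TY))
   + 2 * (of_real (x * z) * ((of_nat n - 1 / of_nat n) * C1)) + 2 * (of_real (x * z) * ((of_nat n - 1 / of_nat n) * C2))
   + 2 * (of_real (y * z) * ((of_nat n + 1) / of_nat n * C1)) + 2 * (of_real (y * z) * ((of_nat n + 1) / of_nat n * C2))
   + 2 * (of_real (z * z) * SY)"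
    unfolding P2 P5 P6 P9 P10 P11 P13 P14 P15 P16 BKK BKS1 BKS2 BIS1 BIS2 BS1S2
    by (simp add: algebra_simps)
  finally show ?thesis .
qed

lemma Yform: assumes p: "p < n" and s: "s < n"
  shows "YY n x y z X p s = of_real (1/x) * (cnj (X p s) - (if p = s then cnj (trn n X) / of_nat n else 0))
     + (if p = s then of_real ((real n + 1)/(real n * y)) * cnj (trn n X) else 0)"
  using p s by (simp add: Gf_Em)

lemma TY_X: "TY = of_nat n * (of_real ((real n + 1)/(real n * y)) * cnj (trn n X))"
proof -
  have nz: "(of_nat n :: complex) \<noteq> 0" using n by simp
  have "TY = (\<Sum>p<n. of_real (1/x) * (cnj (X p p) - cnj (trn n X) / of_nat n) + of_real ((real n + 1)/(real n * y)) * cnj (trn n X))"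
    unfolding TY_def by (intro sum.cong refl) (simp add: Yform)
  also have "\<dots> = of_real (1/x) * (cnj (trn n X) - of_nat n * (cnj (trn n X) / of_nat n)) + of_nat n * (of_real ((real n + 1)/(real n * y)) * cnj (trn n X))"
  proof -
    have "(\<Sum>p<n. of_real (1/x) * (cnj (X p p) - cnj (trn n X) / of_nat n)) = of_real (1/x) * (\<Sum>p<n. (cnj (X p p) - cnj (trn n X) / of_nat n))"
      by (simp only: sum_distrib_left)
    also have "(\<Sum>p<n. (cnj (X p p) - cnj (trn n X) / of_nat n)) = cnj (trn n X) - of_nat n * (cnj (trn n X) / of_nat n)"
      unfolding sum_subtractf by (simp add: trn_def cnj_sum)
    finally show ?thesis by (simp only: sum.distrib) simp
  qed
  also have "\<dots> = of_nat n * (of_real ((real n + 1)/(real n * y)) * cnj (trn n X))" using nz by simp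
  finally show ?thesis .
qed

definition "UU = (\<Sum>p<n. \<Sum>s<n. (X p s - (if p = s then trn n X / of_nat n else 0)) * cnj (X p s - (if p = s then trn n X / of_nat n else 0)))"

lemma SY_X: "SY = of_real (1/(x*x)) * UU + of_nat n * (of_real ((real n + 1)/(real n * y)) * cnj (trn n X)) * cnj (of_real ((real n + 1)/(real n * y)) * cnj (trn n X))"
proof -
  define \<kappa> where "\<kappa> = of_real ((real n + 1)/(real n * y)) * cnj (trn n X)"
  define u where "u = (\<lambda>p s. cnj (X p s) - (if p = s then cnj (trn n X) / of_nat n else 0))"
  have nz: "(of_nat n :: complex) \<noteq> 0" using n by simp
  have us: "(\<Sum>p<n. u p p) = 0"
  proof -
    have "(\<Sum>p<n. u p p) = cnj (trn n X) - of_nat n * (cnj (trn n X) / of_nat n)"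
      unfolding u_def sum_subtractf by (simp add: trn_def cnj_sum)
    thus ?thesis using nz by simp
  qed
  have Yu: "YY n x y z X p s = of_real (1/x) * u p s + (if p = s then \<kappa> else 0)" if "p < n" "s < n" for p s
    using that unfolding Yform[OF that] u_def \<kappa>_def by simp
  have "SY = (\<Sum>p<n. \<Sum>s<n. of_real (1/(x*x)) * (u p s * cnj (u p s)) + (if p = s then of_real (1/x) * (u p p * cnj \<kappa> + \<kappa> * cnj (u p p)) + \<kappa> * cnj \<kappa> else 0))"
    unfolding SY_def
  proof (intro sum.cong refl)
    fix p s assume p: "p \<in> {..<n}" and s: "s \<in> {..<n}"
    show "YY n x y z X p s * cnj (YY n x y z X p s) = of_real (1/(x*x)) * (u p s * cnj (u p s)) + (if p = s then of_real (1/x) * (u p p * cnj \<kappa> + \<kappa> * cnj (u p p)) + \<kappa> * cnj \<kappa> else 0)"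
      unfolding Yu[OF p[simplified] s[simplified]]
      by (cases "p = s") (simp_all add: algebra_simps)
  qed
  also have "\<dots> = of_real (1/(x*x)) * (\<Sum>p<n. \<Sum>s<n. u p s * cnj (u p s)) + (of_real (1/x) * ((\<Sum>p<n. u p p) * cnj \<kappa> + \<kappa> * cnj (\<Sum>p<n. u p p)) + of_nat n * (\<kappa> * cnj \<kappa>))"
    by (simp add: sum.distrib sum_distrib_left sum_distrib_right cnj_sum sum.delta algebra_simps)
  also have "(\<Sum>p<n. \<Sum>s<n. u p s * cnj (u p s)) = UU"
    unfolding UU_def u_def by (intro sum.cong refl) (simp add: mult.commute)
  finally show ?thesis unfolding us \<kappa>_def by simp
qed

lemma C1_X: "C1 = of_real (1/(z*z)) * (\<Sum>r<n. X r n * cnj (X r n))"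
  unfolding C1_def by (simp add: Gf_Em sum_distrib_left algebra_simps)

lemma C2_X: "C2 = of_real (1/(z*z)) * (\<Sum>r<n. X n r * cnj (X n r))"
  unfolding C2_def by (simp add: Gf_Em sum_distrib_left algebra_simps)

lemma TOT_X: assumes X: "X \<in> sl (n+1)"
  shows "(\<Sum>k\<in>Lset n. \<Sum>l\<in>Lset n. FV k l * cnj (FV k l)) =
    2 * Gf n x y z (block_op n (real n * x + z\<^sup>2 / x) ((real n + 1) * z\<^sup>2 / y)
               ((real n + 1) / real n * ((real n - 1) * x + y)) X) X"
proof -
  define T where "T = trn n X"
  define V1 where "V1 = (\<Sum>r<n. X r n * cnj (X r n))"
  define V2 where "V2 = (\<Sum>r<n. X n r * cnj (X n r))"
  have SB: "SB n X X = V1 + V2" unfolding SB_def V1_def V2_def by (simp add: sum.distrib)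
  have SSc: "SS n X X - trn n X * cnj (trn n X) / of_nat n = UU" unfolding SS_center UU_def ..
  have nz: "(of_nat n :: complex) \<noteq> 0" using n by simp
  have xz: "(of_real x :: complex) \<noteq> 0" "(of_real y :: complex) \<noteq> 0" "(of_real z :: complex) \<noteq> 0" using x y z by auto
  have kk: "cnj (of_real ((real n + 1)/(real n * y)) * cnj T) = of_real ((real n + 1)/(real n * y)) * T" by simp
  show ?thesis
    unfolding TOT SY_X TY_X C1_X C2_X Gf_block[OF n X] SB SSc
    unfolding T_def[symmetric] V1_def[symmetric] V2_def[symmetric] kk
    using nz xz by (simp add: field_simps power2_eq_square)
qed

end


definition hk :: "nat \<Rightarrow> nat \<Rightarrow> real" where
  "hk k i = (if i < k then 1 / sqrt (real k * (real k + 1)) else if i = k then - real k / sqrt (real k * (real k + 1)) else 0)"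

lemma hk_zero: "k < i \<Longrightarrow> hk k i = 0" unfolding hk_def by simp

lemma sum_hk_gen: assumes k: "k < M"
  shows "(\<Sum>i<M. hk k i * f i) = ((\<Sum>i<k. f i) - real k * f k) / sqrt (real k * (real k + 1))"
proof -
  have "(\<Sum>i<M. hk k i * f i) = (\<Sum>i<Suc k. hk k i * f i)"
    using k by (intro sum.mono_neutral_right) (auto simp: hk_zero)
  also have "\<dots> = (\<Sum>i<k. f i / sqrt (real k * (real k + 1))) - real k * f k / sqrt (real k * (real k + 1))"
    by (simp add: hk_def)
  finally show ?thesis by (simp add: sum_divide_distrib[symmetric] diff_divide_distrib)
qed

lemma sum_hk: "k < M \<Longrightarrow> (\<Sum>i<M. hk k i) = 0"
  using sum_hk_gen[of k M "\<lambda>_. 1"] by simp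

lemma sum_hk_hk: assumes k: "1 \<le> k" "k < M" and l: "1 \<le> l" "l < M"
  shows "(\<Sum>i<M. hk k i * hk l i) = (if k = l then 1 else 0)"
proof (cases "k = l")
  case True
  have c: "sqrt (real k * (real k + 1)) * sqrt (real k * (real k + 1)) = real k * (real k + 1)" by simp
  have pos: "real k * (real k + 1) > 0" using k by simp
  have "(\<Sum>i<M. hk k i * hk k i) = ((\<Sum>i<k. hk k i) - real k * hk k k) / sqrt (real k * (real k + 1))"
    by (rule sum_hk_gen[OF k(2)])
  also have "(\<Sum>i<k. hk k i) = real k / sqrt (real k * (real k + 1))" by (simp add: hk_def)
  also have "hk k k = - real k / sqrt (real k * (real k + 1))" by (simp add: hk_def)
  finally have "(\<Sum>i<M. hk k i * hk k i) = (real k + real k * real k) / (sqrt (real k * (real k + 1)) * sqrt (real k * (real k + 1)))"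
    by (simp add: field_simps)
  also have "\<dots> = 1" unfolding c using pos by (simp add: field_simps)
  finally show ?thesis using True by simp
next
  case False
  show ?thesis
  proof (cases "k < l")
    case True
    have "(\<Sum>i<M. hk k i * hk l i) = ((\<Sum>i<k. hk l i) - real k * hk l k) / sqrt (real k * (real k + 1))"
      by (rule sum_hk_gen[OF k(2)])
    also have "(\<Sum>i<k. hk l i) = real k * (1 / sqrt (real l * (real l + 1)))" using True by (simp add: hk_def)
    also have "hk l k = 1 / sqrt (real l * (real l + 1))" using True by (simp add: hk_def)
    finally show ?thesis using False by simp
  next
    case F2: False
    hence lk: "l < k" using False by simp
    have "(\<Sum>i<M. hk k i * hk l i) = (\<Sum>i<M. hk l i * hk k i)" by (simp add: mult.commute)
    also have "\<dots> = ((\<Sum>i<l. hk k i) - real l * hk k l) / sqrt (real l * (real l + 1))"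
      by (rule sum_hk_gen[OF l(2)])
    also have "(\<Sum>i<l. hk k i) = real l * (1 / sqrt (real k * (real k + 1)))" using lk by (simp add: hk_def)
    also have "hk k l = 1 / sqrt (real k * (real k + 1))" using lk by (simp add: hk_def)
    finally show ?thesis using False by simp
  qed
qed

lemma hk_complete: "i \<le> n \<Longrightarrow> a \<le> n \<Longrightarrow> (\<Sum>k<n. hk (k+1) i * hk (k+1) a) = (if i = a then 1 else 0) - 1 / (real n + 1)"
proof (induction n arbitrary: i a)
  case 0 thus ?case by simp
next
  case (Suc n)
  let ?c = "sqrt ((real n + 1) * (real n + 2))"
  have cc: "?c * ?c = (real n + 1) * (real n + 2)" by simp
  have cpos: "(real n + 1) * (real n + 2) > 0" by simp
  have h1: "hk (n+1) j = 1 / ?c" if "j \<le> n" for j using that by (simp add: hk_def add.commute)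
  have h2: "hk (n+1) (n+1) = - (real n + 1) / ?c" by (simp add: hk_def add.commute)
  have hz: "hk (k+1) (n+1) = 0" if "k < n" for k using that by (simp add: hk_def)
  have S: "(\<Sum>k<Suc n. hk (k+1) i * hk (k+1) a) = (\<Sum>k<n. hk (k+1) i * hk (k+1) a) + hk (n+1) i * hk (n+1) a"
    by simp
  show ?case
  proof (cases "i \<le> n \<and> a \<le> n")
    case True
    hence "(\<Sum>k<Suc n. hk (k+1) i * hk (k+1) a) = (if i = a then 1 else 0) - 1 / (real n + 1) + 1 / (?c * ?c)"
      unfolding S using Suc.IH[of i a] h1 by simp
    also have "\<dots> = (if i = a then 1 else 0) - 1 / (real (Suc n) + 1)"
    proof -
      have p1: "real n + 1 \<noteq> 0" "real n + 2 \<noteq> 0" by arith+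
      have "- 1 / (real n + 1) + 1 / ((real n + 1) * (real n + 2)) = (- (real n + 2) + 1) / ((real n + 1) * (real n + 2))"
        using p1 by (simp add: add_divide_distrib divide_simps)
      also have "\<dots> = - 1 / (real n + 2)" using p1 by (simp add: divide_simps)
      finally have "- 1 / (real n + 1) + 1 / ((real n + 1) * (real n + 2)) = - 1 / (real n + 2)" .
      thus ?thesis unfolding cc by (simp add: algebra_simps)
    qed
    finally show ?thesis .
  next
    case False
    hence cases: "(i = n+1 \<and> a \<le> n) \<or> (i \<le> n \<and> a = n+1) \<or> (i = n+1 \<and> a = n+1)" using Suc.prems by auto
    have Z: "(\<Sum>k<n. hk (k+1) i * hk (k+1) a) = 0" using cases hz by auto
    from cases show ?thesis
    proof (elim disjE conjE)
      assume i: "i = n+1" and a: "a \<le> n"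
      have "hk (n+1) i * hk (n+1) a = - (real n + 1) / (?c * ?c)" unfolding i h2 h1[OF a] by simp
      also have "\<dots> = - 1 / (real (Suc n) + 1)" unfolding cc using cpos by (simp add: field_simps)
      finally show ?thesis unfolding S Z using i a by simp
    next
      assume i: "i \<le> n" and a: "a = n+1"
      have "hk (n+1) i * hk (n+1) a = - (real n + 1) / (?c * ?c)" unfolding a h2 h1[OF i] by simp
      also have "\<dots> = - 1 / (real (Suc n) + 1)" unfolding cc using cpos by (simp add: field_simps)
      finally show ?thesis unfolding S Z using i a by simp
    next
      assume i: "i = n+1" and a: "a = n+1"
      have "hk (n+1) i * hk (n+1) a = (- (real n + 1) / ?c) * (- (real n + 1) / ?c)" unfolding i a h2 ..
      also have "\<dots> = (real n + 1) * (real n + 1) / (?c * ?c)"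
        by (simp only: minus_divide_left minus_mult_minus times_divide_times_eq)
      also have "\<dots> = 1 - 1 / (real (Suc n) + 1)"
      proof -
        have p1: "real n + 1 \<noteq> 0" "real n + 2 \<noteq> 0" by arith+
        have "(real n + 1) * (real n + 1) / ((real n + 1) * (real n + 2)) = (real n + 1) / (real n + 2)"
          using p1 by simp
        also have "\<dots> = 1 - 1 / (real n + 2)" using p1 by (simp add: divide_simps)
        finally show ?thesis unfolding cc by (simp add: algebra_simps)
      qed
      finally show ?thesis unfolding S Z using i a by simp
    qed
  qed
qed

definition Hm :: "nat \<Rightarrow> cmat" where "Hm k = dg (\<lambda>i. of_real (hk k i))"
definition wt :: "nat \<Rightarrow> real \<Rightarrow> real \<Rightarrow> nat \<Rightarrow> nat \<Rightarrow> real" where "wt n x z p q = (if p < n \<and> q < n then x else z)"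
definition wd :: "nat \<Rightarrow> real \<Rightarrow> real \<Rightarrow> nat \<Rightarrow> real" where "wd n x y k = (if k < n then x else y)"
definition Bm :: "nat \<Rightarrow> real \<Rightarrow> real \<Rightarrow> real \<Rightarrow> nat \<Rightarrow> nat \<Rightarrow> cmat" where
  "Bm n x y z p q = (if p \<noteq> q then msc (of_real (sqrt (wt n x z p q))) (Em p q) else msc (of_real (sqrt (wd n x y (p+1)))) (Hm (p+1)))"

lemma msc_in_sl: "A \<in> sl (n+1) \<Longrightarrow> msc c A \<in> sl (n+1)"
  using ms_in_sl[of A n A c 0] by (simp add: madd_def msc_def)

lemma Hm_in: assumes "1 \<le> k" "k \<le> n" shows "Hm k \<in> sl (n+1)"
proof -
  have "(\<Sum>i<n+1. Hm k i i) = of_real (\<Sum>i<n+1. hk k i)" unfolding Hm_def dg_def by simp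
  also have "\<dots> = 0" using sum_hk[of k "n+1"] assms by simp
  finally show ?thesis unfolding sl_def mat_space_def Hm_def dg_def using assms by (auto simp: hk_zero)
qed

lemma Em_in: "p < n+1 \<Longrightarrow> q < n+1 \<Longrightarrow> p \<noteq> q \<Longrightarrow> Em p q \<in> sl (n+1)"
  unfolding sl_def mat_space_def Em_def by (auto intro!: sum.neutral)

lemma Bm_in: assumes "p < n+1" "q < n+1" "\<not> (p = n \<and> q = n)" shows "Bm n x y z p q \<in> sl (n+1)"
proof (cases "p = q")
  case True
  hence "1 \<le> p + 1" "p + 1 \<le> n" using assms by auto
  moreover have "Bm n x y z p q = msc (of_real (sqrt (wd n x y (p+1)))) (Hm (p+1))" unfolding Bm_def using True by simp
  ultimately show ?thesis using msc_in_sl[OF Hm_in] by metis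
next
  case False
  hence "Bm n x y z p q = msc (of_real (sqrt (wt n x z p q))) (Em p q)" unfolding Bm_def by simp
  thus ?thesis using msc_in_sl[OF Em_in[OF assms(1,2) False]] by metis
qed

lemma trn_Hm: "trn n (Hm k) = of_real (\<Sum>i<n. hk k i)" unfolding trn_def Hm_def dg_def by simp
lemma SS_Hm: "SS n (Hm k) (Hm l) = of_real (\<Sum>i<n. hk k i * hk l i)"
  unfolding SS_def Hm_def dg_def by (simp add: if_distrib[of "\<lambda>u. u * _"] sum.delta cong: if_cong)
lemma SB_Hm: "SB n (Hm k) W = 0" unfolding SB_def Hm_def dg_def by simp

lemma Gf_EE: assumes "p < n+1" "q < n+1" "r < n+1" "s < n+1" "p \<noteq> q" "r \<noteq> s"
  shows "Gf n x y z (Em p q) (Em r s) = (if p = r \<and> q = s then of_real (1 / wt n x z p q) else 0)"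
  using assms unfolding Gf_Em[OF assms(1,2)] wt_def by (auto simp: trn_Em Em_def)

lemma Gf_EH: assumes "p < n+1" "q < n+1" "p \<noteq> q" shows "Gf n x y z (Em p q) (Hm k) = 0"
  using assms unfolding Gf_Em[OF assms(1,2)] by (auto simp: Hm_def dg_def)

lemma Gf_HE: assumes "p < n+1" "q < n+1" "p \<noteq> q" shows "Gf n x y z (Hm k) (Em p q) = 0"
  by (subst Gf_herm) (simp add: Gf_EH[OF assms])

lemma hk_n_lt: "i < n \<Longrightarrow> hk n i = 1 / sqrt (real n * (real n + 1))" unfolding hk_def by simp

lemma Gf_HH: assumes n: "n \<ge> 1" and k: "1 \<le> k" "k \<le> n" and l: "1 \<le> l" "l \<le> n" and x: "x > 0" and y: "y > 0"
  shows "Gf n x y z (Hm k) (Hm l) = (if k = l then of_real (1 / wd n x y k) else 0)"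
proof -
  let ?c = "sqrt (real n * (real n + 1))"
  have cc: "?c * ?c = real n * (real n + 1)" by simp
  have np: "real n > 0" using n by simp
  have tk: "k < n \<Longrightarrow> (\<Sum>i<n. hk k i) = 0" by (rule sum_hk)
  have tl: "l < n \<Longrightarrow> (\<Sum>i<n. hk l i) = 0" by (rule sum_hk)
  have tn: "(\<Sum>i<n. hk n i) = real n / ?c" by (simp add: hk_n_lt)
  have sn: "(\<Sum>i<n. hk n i * hk n i) = 1 / (real n + 1)"
  proof -
    have "(\<Sum>i<n. hk n i * hk n i) = real n * (1 / (?c * ?c))" by (simp add: hk_n_lt)
    also have "\<dots> = 1 / (real n + 1)" unfolding cc using np by simp
    finally show ?thesis .
  qed
  have mixed: "m < n \<Longrightarrow> (\<Sum>i<n. hk m i * hk n i) = 0" for m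
    using sum_hk[of m n] by (simp add: hk_n_lt sum_divide_distrib[symmetric])
  show ?thesis
  proof (cases "k < n")
    case kn: True
    show ?thesis
    proof (cases "l < n")
      case True
      show ?thesis unfolding Gf_def SS_Hm trn_Hm SB_Hm tk[OF kn] tl[OF True] sum_hk_hk[OF k(1) kn l(1) True]
        using kn by (auto simp: wd_def)
    next
      case False
      hence "l = n" using l by simp
      thus ?thesis unfolding Gf_def SS_Hm trn_Hm SB_Hm tk[OF kn] using mixed[OF kn] kn by simp
    qed
  next
    case False
    hence kn: "k = n" using k by simp
    show ?thesis
    proof (cases "l < n")
      case True
      have "(\<Sum>i<n. hk n i * hk l i) = 0" using mixed[OF True] by (simp add: mult.commute)
      thus ?thesis unfolding Gf_def SS_Hm trn_Hm SB_Hm kn tl[OF True] using True by simp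
    next
      case False
      hence ln: "l = n" using l by simp
      have r1: "real n / ?c * (real n / ?c) = real n / (real n + 1)"
        using np by (simp add: cc)
      have t1: "of_real (real n / ?c) * cnj (of_real (real n / ?c)) = (of_real (real n / (real n + 1)) :: complex)"
        unfolding complex_cnj_complex_of_real of_real_mult[symmetric] r1 ..
      have t2r: "real n / (real n + 1) / real n = 1 / (real n + 1)" using np by simp
      have t2: "(of_real (real n / (real n + 1)) :: complex) / of_nat n = of_real (1 / (real n + 1))"
        unfolding t2r[symmetric] of_real_divide by simp
      have t3: "(real n + 1) / (real n * y) * (real n / (real n + 1)) = 1 / y"
      proof -
        have p: "y * real n + y * (real n * real n) \<noteq> 0" using np y
          by (metis add_pos_nonneg mult_pos_pos zero_le_mult_iff less_imp_le less_irrefl)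
        show ?thesis using np y p by (simp add: field_simps)
      qed
      have "Gf n x y z (Hm n) (Hm n) = of_real (1/x) * (of_real (1 / (real n + 1)) - of_real (real n / ?c) * cnj (of_real (real n / ?c)) / of_nat n)
          + of_real ((real n + 1) / (real n * y)) * (of_real (real n / ?c) * cnj (of_real (real n / ?c))) + of_real (1/z) * 0"
        unfolding Gf_def SS_Hm trn_Hm SB_Hm sn tn ..
      also have "\<dots> = of_real ((real n + 1) / (real n * y) * (real n / (real n + 1)))"
        unfolding t1 t2 by simp
      also have "\<dots> = of_real (1 / y)" unfolding t3 ..
      finally show ?thesis unfolding kn ln wd_def by simp
    qed
  qed
qed

lemma Gf_msc2: "Gf n x y z W (msc b B) = cnj b * Gf n x y z W B"
  by (subst Gf_herm) (simp add: Gf_msc Gf_herm[of n x y z B W])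

lemma Gf_BB:
  assumes n: "n \<ge> 1" and x: "x > 0" and y: "y > 0" and z: "z > 0"
    and pq: "p < n+1" "q < n+1" "\<not> (p = n \<and> q = n)" and rs: "r < n+1" "s < n+1" "\<not> (r = n \<and> s = n)"
  shows "Gf n x y z (Bm n x y z p q) (Bm n x y z r s) = (if p = r \<and> q = s then 1 else 0)"
proof -
  have wtp: "wt n x z a b > 0" for a b using x z by (simp add: wt_def)
  have wdp: "wd n x y a > 0" for a using x y by (simp add: wd_def)
  have sq1: "of_real (sqrt w) * cnj (of_real (sqrt w)) * of_real (1 / w) = (1::complex)" if "w > 0" for w
  proof -
    have "of_real (sqrt w) * cnj (of_real (sqrt w)) * of_real (1 / w) = (of_real (sqrt w) * of_real (sqrt w) * of_real (1 / w) :: complex)"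
      by (simp only: complex_cnj_complex_of_real)
    also have "\<dots> = of_real w * of_real (1 / w)" unfolding sqc[OF less_imp_le[OF that]] ..
    also have "\<dots> = 1" using that by simp
    finally show ?thesis .
  qed
  show ?thesis
  proof (cases "p = q")
    case pq': True
    hence k: "1 \<le> p + 1" "p + 1 \<le> n" using pq by auto
    show ?thesis
    proof (cases "r = s")
      case True
      hence l: "1 \<le> r + 1" "r + 1 \<le> n" using rs by auto
      show ?thesis unfolding Bm_def using pq' True Gf_HH[OF n k l x y] sq1[OF wdp]
        by (auto simp: Gf_msc Gf_msc2)
    next
      case False
      show ?thesis unfolding Bm_def using pq' False Gf_HE[OF rs(1,2) False] by (simp add: Gf_msc Gf_msc2)
    qed
  next
    case pq': False
    show ?thesis
    proof (cases "r = s")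
      case True
      show ?thesis unfolding Bm_def using pq' True Gf_EH[OF pq(1,2) pq'] by (simp add: Gf_msc Gf_msc2)
    next
      case False
      show ?thesis unfolding Bm_def using pq' False Gf_EE[OF pq(1,2) rs(1,2) pq' False] sq1[OF wtp]
        by (auto simp: Gf_msc Gf_msc2)
    qed
  qed
qed

lemma helmert_expand:
  fixes v :: "nat \<Rightarrow> complex"
  assumes s: "(\<Sum>i<n+1. v i) = 0" and a: "a \<le> n"
  shows "(\<Sum>k<n. (\<Sum>i<n+1. v i * of_real (hk (k+1) i)) * of_real (hk (k+1) a)) = v a"
proof -
  have "(\<Sum>k<n. (\<Sum>i<n+1. v i * of_real (hk (k+1) i)) * of_real (hk (k+1) a))
      = (\<Sum>k<n. \<Sum>i<n+1. v i * of_real (hk (k+1) i * hk (k+1) a))"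
    by (simp add: sum_distrib_right mult.assoc distrib_right)
  also have "\<dots> = (\<Sum>i<n+1. \<Sum>k<n. v i * of_real (hk (k+1) i * hk (k+1) a))" by (rule sum.swap)
  also have "\<dots> = (\<Sum>i<n+1. v i * of_real ((if i = a then 1 else 0) - 1 / (real n + 1)))"
  proof (rule sum.cong[OF refl])
    fix i assume i: "i \<in> {..<n+1}"
    have "(\<Sum>k<n. v i * of_real (hk (k+1) i * hk (k+1) a)) = v i * of_real (\<Sum>k<n. hk (k+1) i * hk (k+1) a)"
      by (simp add: sum_distrib_left)
    also have "\<dots> = v i * of_real ((if i = a then 1 else 0) - 1 / (real n + 1))"
      using hk_complete[of i n a] i a by simp
    finally show "(\<Sum>k<n. v i * of_real (hk (k+1) i * hk (k+1) a)) = v i * of_real ((if i = a then 1 else 0) - 1 / (real n + 1))" .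
  qed
  also have "\<dots> = (\<Sum>i<n+1. (if i = a then v i else 0)) - (\<Sum>i<n+1. v i) * of_real (1 / (real n + 1))"
  proof -
    have "(\<Sum>i<n+1. v i * of_real ((if i = a then 1 else 0) - 1 / (real n + 1)))
        = (\<Sum>i<n+1. (if i = a then v i else 0) - v i * of_real (1 / (real n + 1)))"
      by (rule sum.cong) (auto simp: algebra_simps)
    thus ?thesis by (simp only: sum_subtractf sum_distrib_right)
  qed
  also have "\<dots> = v a" using s a by simp
  finally show ?thesis .
qed

lemma sum_rows: fixes f :: "nat \<Rightarrow> 'a::comm_monoid_add" shows "(\<Sum>m<P*N. f m) = (\<Sum>p<P. \<Sum>q<N. f (p*N+q))"
proof -
  have "(\<Sum>m<P*N. f m) = (\<Sum>p<P. \<Sum>i\<in>{p*N..<p*N+N}. f i)" using sum.nat_group[of f N P] by simp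
  also have "\<dots> = (\<Sum>p<P. \<Sum>q<N. f (p*N+q))"
  proof (rule sum.cong[OF refl])
    fix p show "(\<Sum>i\<in>{p*N..<p*N+N}. f i) = (\<Sum>q<N. f (p*N+q))"
      using sum.shift_bounds_nat_ivl[of f 0 "p*N" N] by (simp add: atLeast0LessThan add.commute)
  qed
  finally show ?thesis .
qed

lemma ub_exists:
  assumes n: "n \<ge> 1" and x: "x > 0" and y: "y > 0" and z: "z > 0"
  shows "\<exists>es d. unitary_basis (sl (n+1)) (gxyz n x y z) es d"
proof -
  define N where "N = n + 1"
  have Npos: "N > 0" unfolding N_def by simp
  define es where "es = (\<lambda>m. Bm n x y z (m div N) (m mod N))"
  define d where "d = N * N - 1"
  have NN: "N * N = Suc d" unfolding d_def using Npos by simp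
  have dd: "d div N = n \<and> d mod N = n"
  proof -
    have e: "d = n + n * N" unfolding d_def N_def by (simp add: algebra_simps)
    have nl: "n < N" unfolding N_def by simp
    show ?thesis unfolding e using nl Npos by simp
  qed
  have idx: "m div N < n+1 \<and> m mod N < n+1 \<and> \<not> (m div N = n \<and> m mod N = n)" if m: "m < d" for m
  proof -
    have "m < N * N" using m NN by simp
    hence a: "m div N < N" using Npos by (simp add: div_less_iff_less_mult)
    have b: "m mod N < N" using Npos by simp
    have c: "\<not> (m div N = n \<and> m mod N = n)"
    proof
      assume "m div N = n \<and> m mod N = n"
      hence "m = n * N + n" by (metis div_mult_mod_eq)
      also have "\<dots> = d" unfolding d_def N_def by (simp add: algebra_simps)
      finally show False using m by simp
    qed
    show ?thesis using a b c unfolding N_def by simp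
  qed
  have inV: "\<forall>m<d. es m \<in> sl (n+1)"
    using idx Bm_in unfolding es_def by blast
  have ON: "\<forall>i<d. \<forall>j<d. gxyz n x y z (es i) (es j) = (if i = j then 1 else 0)"
  proof (intro allI impI)
    fix i j assume i: "i < d" and j: "j < d"
    have "gxyz n x y z (es i) (es j) = Gf n x y z (es i) (es j)"
      using g_eq[OF n] inV i j by blast
    also have "\<dots> = (if i div N = j div N \<and> i mod N = j mod N then 1 else 0)"
      unfolding es_def using Gf_BB[OF n x y z] idx[OF i] idx[OF j] by blast
    also have "(i div N = j div N \<and> i mod N = j mod N) = (i = j)"
      by (metis div_mult_mod_eq)
    finally show "gxyz n x y z (es i) (es j) = (if i = j then 1 else 0)" .
  qed
  have SP: "\<forall>X\<in>sl (n+1). \<exists>a::nat \<Rightarrow> complex. X = (\<lambda>p q. \<Sum>i<d. a i * es i p q)"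
  proof
    fix X assume X: "X \<in> sl (n+1)"
    define hc where "hc = (\<lambda>k. \<Sum>i<n+1. X i i * of_real (hk (k+1) i))"
    define cc where "cc = (\<lambda>p q. if p \<noteq> q then of_real (1 / sqrt (wt n x z p q)) * X p q
        else if p < n then of_real (1 / sqrt (wd n x y (p+1))) * hc p else 0)"
    have wtp: "wt n x z p q > 0" for p q using x z by (simp add: wt_def)
    have wdp: "wd n x y k > 0" for k using x y by (simp add: wd_def)
    have inv1: "of_real (1 / sqrt w) * of_real (sqrt w) = (1::complex)" if "w > 0" for w
    proof -
      have "of_real (1 / sqrt w) * of_real (sqrt w) = (of_real (1 / sqrt w * sqrt w) :: complex)" by simp
      also have "1 / sqrt w * sqrt w = 1" using that by simp
      finally show ?thesis by simp
    qed
    have T: "cc p q * Bm n x y z p q a b = (if p \<noteq> q then X p q * (if a = p \<and> b = q then 1 else 0)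
        else if p < n then hc p * (if a = b then of_real (hk (p+1) a) else 0) else 0)" for p q a b
    proof (cases "p = q")
      case True
      show ?thesis
      proof (cases "p < n")
        case pn: True
        have "cc p q * Bm n x y z p q a b = (of_real (1 / sqrt (wd n x y (p+1))) * of_real (sqrt (wd n x y (p+1)))) * hc p * Hm (p+1) a b"
          unfolding cc_def Bm_def msc_def using True pn by simp
        thus ?thesis unfolding inv1[OF wdp] using True pn by (simp add: Hm_def dg_def)
      next
        case False thus ?thesis unfolding cc_def using True by simp
      qed
    next
      case False
      have "cc p q * Bm n x y z p q a b = (of_real (1 / sqrt (wt n x z p q)) * of_real (sqrt (wt n x z p q))) * X p q * Em p q a b"
        unfolding cc_def Bm_def msc_def using False by simp
      thus ?thesis unfolding inv1[OF wtp] using False by (simp add: Em_def)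
    qed
    define a where "a = (\<lambda>m. cc (m div N) (m mod N))"
    have "X = (\<lambda>p q. \<Sum>i<d. a i * es i p q)"
    proof (intro ext)
      fix r t
      let ?F = "\<lambda>m. cc (m div N) (m mod N) * Bm n x y z (m div N) (m mod N) r t"
      have "(\<Sum>i<d. a i * es i r t) = (\<Sum>m<d. ?F m)" unfolding a_def es_def ..
      also have "\<dots> = (\<Sum>m<N*N. ?F m)" unfolding NN using dd by (simp add: cc_def)
      also have "\<dots> = (\<Sum>p<N. \<Sum>q<N. ?F (p*N+q))" by (rule sum_rows)
      also have "\<dots> = (\<Sum>p<N. \<Sum>q<N. cc p q * Bm n x y z p q r t)"
        using Npos by (intro sum.cong refl) simp
      also have "\<dots> = (\<Sum>p<N. \<Sum>q<N. (if p \<noteq> q then X p q * (if r = p \<and> t = q then 1 else 0)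
        else if p < n then hc p * (if r = t then of_real (hk (p+1) r) else 0) else 0))"
        unfolding T ..
      also have "\<dots> = X r t"
      proof (cases "r = t")
        case False
        have "(\<Sum>p<N. \<Sum>q<N. (if p \<noteq> q then X p q * (if r = p \<and> t = q then 1 else 0)
          else if p < n then hc p * (if r = t then of_real (hk (p+1) r) else 0) else 0))
          = (\<Sum>p<N. \<Sum>q<N. (if r = p then (if t = q then X r t else 0) else 0))"
          using False by (intro sum.cong refl) auto
        also have "\<dots> = (if r < N \<and> t < N then X r t else 0)" by (simp add: sum.delta sum.delta' sum_ifP)
        also have "\<dots> = X r t" using sl_zero[OF X, of r t] unfolding N_def by auto
        finally show ?thesis .
      next
        case True
        have "(\<Sum>p<N. \<Sum>q<N. (if p \<noteq> q then X p q * (if r = p \<and> t = q then 1 else 0)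
          else if p < n then hc p * (if r = t then of_real (hk (p+1) r) else 0) else 0))
          = (\<Sum>p<N. \<Sum>q<N. (if p = q then (if p < n then hc p * of_real (hk (p+1) r) else 0) else 0))"
          using True by (intro sum.cong refl) auto
        also have "\<dots> = (\<Sum>p<N. (if p < n then hc p * of_real (hk (p+1) r) else 0))"
          by (simp add: sum.delta)
        also have "\<dots> = (\<Sum>p<n. hc p * of_real (hk (p+1) r))"
          unfolding N_def sum_upto_Suc by simp
        also have "\<dots> = X r t"
        proof (cases "r \<le> n")
          case True
          have tr: "(\<Sum>i<n+1. X i i) = 0" using X unfolding sl_def by simp
          show ?thesis unfolding hc_def using helmert_expand[OF tr True] \<open>r = t\<close> by simp
        next
          case False
          have "(\<Sum>p<n. hc p * of_real (hk (p+1) r)) = 0" using False by (intro sum.neutral) (simp add: hk_zero)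
          thus ?thesis using sl_zero[OF X, of r t] False \<open>r = t\<close> by simp
        qed
        finally show ?thesis .
      qed
      finally show "X r t = (\<Sum>i<d. a i * es i r t)" by simp
    qed
    thus "\<exists>a::nat \<Rightarrow> complex. X = (\<lambda>p q. \<Sum>i<d. a i * es i p q)" by blast
  qed
  have "unitary_basis (sl (n+1)) (gxyz n x y z) es d"
    unfolding unitary_basis_def using inV ON SP by blast
  thus ?thesis by blast
qed


lemma comm_in_sl: assumes u: "u \<in> mat_space (n+1)" and v: "v \<in> mat_space (n+1)"
  shows "comm (n+1) u v \<in> sl (n+1)"
proof -
  have "(\<Sum>i<n+1. comm (n+1) u v i i) = (\<Sum>i<n+1. \<Sum>k<n+1. u i k * v k i) - (\<Sum>i<n+1. \<Sum>k<n+1. v i k * u k i)"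
    unfolding comm_def by (simp add: sum_subtractf)
  also have "(\<Sum>i<n+1. \<Sum>k<n+1. v i k * u k i) = (\<Sum>i<n+1. \<Sum>k<n+1. u i k * v k i)"
    by (subst sum.swap) (simp add: mult.commute)
  finally have t: "(\<Sum>i<n+1. comm (n+1) u v i i) = 0" by simp
  have m: "comm (n+1) u v \<in> mat_space (n+1)"
    using u v unfolding mat_space_def comm_def by auto
  show ?thesis using t m unfolding sl_def by simp
qed

lemma sl_mat: "M \<in> sl N \<Longrightarrow> M \<in> mat_space N" unfolding sl_def by simp

lemma comm_lc_r: "comm N u (lc a E d) = lc a (\<lambda>i. comm N u (E i)) d"
  unfolding comm_def lc_def
  by (intro ext) (simp add: sum_distrib_left sum_subtractf sum_distrib_right sum.swap[of _ "{..<N}"] algebra_simps)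

lemma comm_lc_l: "comm N (lc a E d) v = lc a (\<lambda>i. comm N (E i) v) d"
  unfolding comm_def lc_def
  by (intro ext) (simp add: sum_distrib_left sum_subtractf sum_distrib_right sum.swap[of _ "{..<N}"] algebra_simps)

lemma Gf_comm_anti: "Gf n x y z (comm N u v) X = - Gf n x y z (comm N v u) X"
  by (subst comm_anti) (simp add: Gf_msc)

lemma Gf_comm_self: "Gf n x y z (comm N u u) X = 0"
  using Gf_comm_anti[of n x y z N u u X] by simp

lemma frob_msc1: "frob N (msc c M) W = c * frob N M W" by (rule frob_msc)

lemma prI_msc: "prI n (msc c M) = msc c (prI n M)"
  unfolding prI_def frob_msc by (simp add: msc_def mult.assoc)

lemma gxyz_msc: "gxyz n x y z (msc c M) W = c * gxyz n x y z M W"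
proof -
  have "sigma n x y z (msc c M) = msc c (sigma n x y z M)"
    unfolding sigma_def block_op_def prSl_def prI_msc
    unfolding madd_def msc_def prS_def by (intro ext) (simp add: algebra_simps)
  thus ?thesis unfolding gxyz_def by (simp add: frob_msc)
qed

lemma g_comm_anti: "gxyz n x y z (comm N u v) X = - gxyz n x y z (comm N v u) X"
  by (subst comm_anti) (simp add: gxyz_msc)

lemma g_comm_self: "gxyz n x y z (comm N u u) X = 0"
  using g_comm_anti[of n x y z N u u X] by simp

definition P0 :: "nat \<Rightarrow> real \<Rightarrow> real \<Rightarrow> real \<Rightarrow> cmat \<Rightarrow> cmat" where
  "P0 n x y z = (\<lambda>X. if X \<in> sl (n+1) then block_op n (real n * x + z\<^sup>2 / x) ((real n + 1) * z\<^sup>2 / y)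
               ((real n + 1) / real n * ((real n - 1) * x + y)) X else mzero)"

context
  fixes n :: nat and x y z :: real
  assumes n: "n \<ge> 1" and x: "x > 0" and y: "y > 0" and z: "z > 0"
begin

lemma flin1: assumes u: "u \<in> sl (n+1)" and X: "X \<in> sl (n+1)"
  shows "flin (sl (n+1)) (\<lambda>v. gxyz n x y z (comm (n+1) u v) X)"
  unfolding flin_def
proof (intro allI impI)
  fix a :: "nat \<Rightarrow> complex" and E :: "nat \<Rightarrow> cmat" and d :: nat assume E: "\<forall>i<d. E i \<in> sl (n+1)"
  have c: "\<forall>i<d. comm (n+1) u (E i) \<in> sl (n+1)" using E u comm_in_sl sl_mat by blast
  show "gxyz n x y z (comm (n+1) u (lc a E d)) X = (\<Sum>i<d. a i * gxyz n x y z (comm (n+1) u (E i)) X)"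
    unfolding comm_lc_r by (rule lin_props(1)[OF n, of x y z, unfolded lin1_def, rule_format, OF c[rule_format] X])
qed

lemma flin2: assumes v: "v \<in> sl (n+1)" and X: "X \<in> sl (n+1)"
  shows "flin (sl (n+1)) (\<lambda>u. gxyz n x y z (comm (n+1) u v) X)"
  unfolding flin_def
proof (intro allI impI)
  fix a :: "nat \<Rightarrow> complex" and E :: "nat \<Rightarrow> cmat" and d :: nat assume E: "\<forall>i<d. E i \<in> sl (n+1)"
  have c: "\<forall>i<d. comm (n+1) (E i) v \<in> sl (n+1)" using E v comm_in_sl sl_mat by blast
  show "gxyz n x y z (comm (n+1) (lc a E d) v) X = (\<Sum>i<d. a i * gxyz n x y z (comm (n+1) (E i) v) X)"
    unfolding comm_lc_l by (rule lin_props(1)[OF n, of x y z, unfolded lin1_def, rule_format, OF c[rule_format] X])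
qed

lemma frame_g: "\<forall>w\<in>sl (n+1). gxyz n x y z w w = of_real (\<Sum>l\<in>Lset n. (cmod (gxyz n x y z (fb n x y z l) w))\<^sup>2)"
proof
  fix w assume w: "w \<in> sl (n+1)"
  have "(\<Sum>l\<in>Lset n. (cmod (gxyz n x y z (fb n x y z l) w))\<^sup>2) = (\<Sum>l\<in>Lset n. (cmod (Gf n x y z (fb n x y z l) w))\<^sup>2)"
    by (intro sum.cong refl) (simp add: g_eq[OF n fb_in[OF n] w] del: fb.simps)
  thus "gxyz n x y z w w = of_real (\<Sum>l\<in>Lset n. (cmod (gxyz n x y z (fb n x y z l) w))\<^sup>2)"
    using frame_identity[OF n x y z, of w] g_eq[OF n w w] by simp
qed

lemma quad:
  assumes ub: "unitary_basis (sl (n+1)) (gxyz n x y z) es d" and X: "X \<in> sl (n+1)"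
  shows "gxyz n x y z (P0 n x y z X) X = of_real (\<Sum>i<d. \<Sum>j\<in>{i<..<d}. (cmod (gxyz n x y z (comm (n+1) (es i) (es j)) X))\<^sup>2)"
proof -
  let ?g = "gxyz n x y z"
  let ?h = "\<lambda>i j. (cmod (?g (comm (n+1) (es i) (es j)) X))\<^sup>2"
  have ev: "\<forall>i<d. es i \<in> sl (n+1)" using ub unfolding unitary_basis_def by blast
  have cin: "\<And>u v. u \<in> sl (n+1) \<Longrightarrow> v \<in> sl (n+1) \<Longrightarrow> comm (n+1) u v \<in> sl (n+1)"
    using comm_in_sl sl_mat by blast
  have gG: "\<And>u v. u \<in> sl (n+1) \<Longrightarrow> v \<in> sl (n+1) \<Longrightarrow> ?g (comm (n+1) u v) X = Gf n x y z (comm (n+1) u v) X"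
    using g_eq[OF n _ X] cin by blast
  have tri: "(\<Sum>i<d. \<Sum>j\<in>{i<..<d}. ?h i j) = (\<Sum>i<d. \<Sum>j<d. ?h i j) / 2"
  proof (rule triangle_half)
    fix i j
    show "?h i j = ?h j i" by (subst g_comm_anti) simp
  next
    fix i show "?h i i = 0" by (simp add: g_comm_self)
  qed
  have fbin: "\<forall>l\<in>Lset n. fb n x y z l \<in> sl (n+1)" using fb_in[OF n] by blast
  have fl1: "\<forall>u\<in>sl (n+1). flin (sl (n+1)) (\<lambda>v. ?g (comm (n+1) u v) X)" using flin1 X by blast
  have fl2: "\<forall>v\<in>sl (n+1). flin (sl (n+1)) (\<lambda>u. ?g (comm (n+1) u v) X)" using flin2 X by blast
  have FB: "(\<Sum>i<d. \<Sum>j<d. ?h i j) = (\<Sum>k\<in>Lset n. \<Sum>l\<in>Lset n. (cmod (?g (comm (n+1) (fb n x y z k) (fb n x y z l)) X))\<^sup>2)"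
    by (rule frame_bilinear[OF ub lin_props(1)[OF n] lin_props(2)[OF n] lin_props(3)[OF n] fl1 fl2 finite_Lset fbin frame_g])
  also have "\<dots> = (\<Sum>k\<in>Lset n. \<Sum>l\<in>Lset n. (cmod (Gf n x y z (comm (n+1) (fb n x y z k) (fb n x y z l)) X))\<^sup>2)"
    using fbin gG by (intro sum.cong refl) (simp del: fb.simps)
  finally have FB2: "of_real (\<Sum>i<d. \<Sum>j<d. ?h i j) = (\<Sum>k\<in>Lset n. \<Sum>l\<in>Lset n. Gf n x y z (comm (n+1) (fb n x y z k) (fb n x y z l)) X * cnj (Gf n x y z (comm (n+1) (fb n x y z k) (fb n x y z l)) X))"
    by (simp only: of_real_sum complex_norm_square)
  also have "\<dots> = 2 * Gf n x y z (P0 n x y z X) X"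
    unfolding TOT_X[OF n x y z X] P0_def using X by simp
  finally have "of_real (\<Sum>i<d. \<Sum>j<d. ?h i j) = 2 * Gf n x y z (P0 n x y z X) X" .
  moreover have "?g (P0 n x y z X) X = Gf n x y z (P0 n x y z X) X"
    unfolding P0_def using X g_eq[OF n block_in_sl[OF n X] X] by simp
  ultimately show ?thesis unfolding tri by simp
qed

lemma block_lin: assumes X: "X \<in> sl (n+1)" and Y: "Y \<in> sl (n+1)"
  shows "block_op n A B C (madd (msc a X) (msc b Y)) = madd (msc a (block_op n A B C X)) (msc b (block_op n A B C Y))"
proof (intro ext)
  fix i j
  show "block_op n A B C (madd (msc a X) (msc b Y)) i j = madd (msc a (block_op n A B C X)) (msc b (block_op n A B C Y)) i j"
    unfolding block_entries[OF n ms_in_sl[OF X Y]] trn_ms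
    unfolding madd_def msc_def
    unfolding block_entries[OF n X] block_entries[OF n Y]
    by (simp add: ring_distribs mult_ac add_divide_distrib)
qed

lemma P0_ttcr: "is_ttcr (sl (n+1)) (gxyz n x y z) (comm (n+1)) (P0 n x y z)"
  unfolding is_ttcr_def
proof (intro conjI ballI allI impI)
  fix X assume X: "X \<in> sl (n+1)"
  show "P0 n x y z X \<in> sl (n+1)" unfolding P0_def using X block_in_sl[OF n X] by simp
next
  fix X Y :: cmat and a b :: complex assume X: "X \<in> sl (n+1)" and Y: "Y \<in> sl (n+1)"
  show "P0 n x y z (madd (msc a X) (msc b Y)) = madd (msc a (P0 n x y z X)) (msc b (P0 n x y z Y))"
    unfolding P0_def using X Y ms_in_sl[OF X Y] block_lin[OF X Y] by simp
next
  fix X Y assume X: "X \<in> sl (n+1)" and Y: "Y \<in> sl (n+1)"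
  show "gxyz n x y z (P0 n x y z X) Y = gxyz n x y z X (P0 n x y z Y)"
    unfolding P0_def using X Y g_eq[OF n block_in_sl[OF n X] Y] g_eq[OF n X block_in_sl[OF n Y]] Gf_block_herm[OF n X Y]
    by simp
next
  fix es d X assume ub: "unitary_basis (sl (n+1)) (gxyz n x y z) es d" and X: "X \<in> sl (n+1)"
  show "gxyz n x y z (P0 n x y z X) X = of_real (\<Sum>i<d. \<Sum>j\<in>{i<..<d}. (cmod (gxyz n x y z (comm (n+1) (es i) (es j)) X))\<^sup>2)"
    by (rule quad[OF ub X])
qed

end

lemma Gf_ms2: "Gf n x y z W (madd (msc a A) (msc b B)) = cnj a * Gf n x y z W A + cnj b * Gf n x y z W B"
  by (subst Gf_herm) (simp add: Gf_ms Gf_herm[of n x y z A W] Gf_herm[of n x y z B W])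

lemma polar:
  assumes Bl: "\<And>X Y W a b. X \<in> V \<Longrightarrow> Y \<in> V \<Longrightarrow> W \<in> V \<Longrightarrow> Bf (madd (msc a X) (msc b Y)) W = a * Bf X W + b * Bf Y W"
    and Br: "\<And>X Y W a b. X \<in> V \<Longrightarrow> Y \<in> V \<Longrightarrow> W \<in> V \<Longrightarrow> Bf W (madd (msc a X) (msc b Y)) = cnj a * Bf W X + cnj b * Bf W Y"
    and cl: "\<And>X Y a b. X \<in> V \<Longrightarrow> Y \<in> V \<Longrightarrow> madd (msc a X) (msc b Y) \<in> V"
    and zz: "\<And>X. X \<in> V \<Longrightarrow> Bf X X = 0" and X: "X \<in> V" and Y: "Y \<in> V"
  shows "Bf X Y = 0"
proof -
  let ?S1 = "madd (msc 1 X) (msc 1 Y)" and ?S2 = "madd (msc 1 X) (msc \<i> Y)"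
  have S1: "?S1 \<in> V" and S2: "?S2 \<in> V" using cl X Y by auto
  have "0 = Bf ?S1 ?S1" using zz S1 by simp
  also have "\<dots> = Bf X ?S1 + Bf Y ?S1" using Bl[OF X Y S1, of 1 1] by simp
  also have "\<dots> = (Bf X X + Bf X Y) + (Bf Y X + Bf Y Y)" using Br[OF X Y X, of 1 1] Br[OF X Y Y, of 1 1] by simp
  finally have e1: "Bf X Y + Bf Y X = 0" using zz X Y by simp
  have "0 = Bf ?S2 ?S2" using zz S2 by simp
  also have "\<dots> = Bf X ?S2 + \<i> * Bf Y ?S2" using Bl[OF X Y S2, of 1 \<i>] by simp
  also have "\<dots> = (Bf X X - \<i> * Bf X Y) + \<i> * (Bf Y X - \<i> * Bf Y Y)" using Br[OF X Y X, of 1 \<i>] Br[OF X Y Y, of 1 \<i>] by simp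
  finally have e2: "\<i> * (Bf Y X - Bf X Y) = 0" using zz X Y by (simp add: algebra_simps)
  hence "Bf Y X = Bf X Y" by simp
  thus ?thesis using e1 by simp
qed

lemma uniq:
  assumes n: "n \<ge> 1" and x: "x > 0" and y: "y > 0" and z: "z > 0"
    and P: "is_ttcr (sl (n+1)) (gxyz n x y z) (comm (n+1)) P"
    and Pz: "\<forall>X. X \<notin> sl (n+1) \<longrightarrow> P X = mzero"
    and ub: "unitary_basis (sl (n+1)) (gxyz n x y z) es d"
  shows "P = P0 n x y z"
proof -
  let ?V = "sl (n+1)"
  have Pin: "\<And>X. X \<in> ?V \<Longrightarrow> P X \<in> ?V" using P unfolding is_ttcr_def by blast
  have Plin: "\<And>X Y a b. X \<in> ?V \<Longrightarrow> Y \<in> ?V \<Longrightarrow> P (madd (msc a X) (msc b Y)) = madd (msc a (P X)) (msc b (P Y))"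
    using P unfolding is_ttcr_def by blast
  have Pq: "\<And>X. X \<in> ?V \<Longrightarrow> gxyz n x y z (P X) X = of_real (\<Sum>i<d. \<Sum>j\<in>{i<..<d}. (cmod (gxyz n x y z (comm (n+1) (es i) (es j)) X))\<^sup>2)"
    using P ub unfolding is_ttcr_def by blast
  have P0in: "\<And>X. X \<in> ?V \<Longrightarrow> P0 n x y z X \<in> ?V" using P0_ttcr[OF n x y z] unfolding is_ttcr_def by blast
  have P0lin: "\<And>X Y a b. X \<in> ?V \<Longrightarrow> Y \<in> ?V \<Longrightarrow> P0 n x y z (madd (msc a X) (msc b Y)) = madd (msc a (P0 n x y z X)) (msc b (P0 n x y z Y))"
    using P0_ttcr[OF n x y z] unfolding is_ttcr_def by blast
  define Bf where "Bf = (\<lambda>X W. Gf n x y z (P X) W - Gf n x y z (P0 n x y z X) W)"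
  have zz: "Bf X X = 0" if X: "X \<in> ?V" for X
  proof -
    have "Gf n x y z (P X) X = gxyz n x y z (P X) X" using g_eq[OF n Pin[OF X] X] by simp
    also have "\<dots> = gxyz n x y z (P0 n x y z X) X" unfolding Pq[OF X] quad[OF n x y z ub X] ..
    also have "\<dots> = Gf n x y z (P0 n x y z X) X" using g_eq[OF n P0in[OF X] X] by simp
    finally show ?thesis unfolding Bf_def by simp
  qed
  have Bl: "Bf (madd (msc a X) (msc b Y)) W = a * Bf X W + b * Bf Y W" if "X \<in> ?V" "Y \<in> ?V" "W \<in> ?V" for X Y W a b
    unfolding Bf_def Plin[OF that(1,2)] P0lin[OF that(1,2)] Gf_ms by (simp add: algebra_simps)
  have Br: "Bf W (madd (msc a X) (msc b Y)) = cnj a * Bf W X + cnj b * Bf W Y" if "X \<in> ?V" "Y \<in> ?V" "W \<in> ?V" for X Y W a b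
    unfolding Bf_def Gf_ms2 by (simp add: algebra_simps)
  have B0: "Bf X W = 0" if "X \<in> ?V" "W \<in> ?V" for X W
    by (rule polar[of ?V Bf, OF Bl Br ms_in_sl zz that])
  show ?thesis
  proof (rule ext)
    fix X
    show "P X = P0 n x y z X"
    proof (cases "X \<in> ?V")
      case False thus ?thesis using Pz unfolding P0_def by simp
    next
      case True
      define D where "D = madd (msc 1 (P X)) (msc (-1) (P0 n x y z X))"
      have D: "D \<in> ?V" unfolding D_def by (rule ms_in_sl[OF Pin[OF True] P0in[OF True]])
      have "Gf n x y z D D = Bf X D" unfolding D_def Bf_def Gf_ms by simp
      also have "\<dots> = 0" by (rule B0[OF True D])
      finally have "D = mzero" by (rule Gf_pos_zero[OF n x y z D])
      hence "\<And>i j. P X i j - P0 n x y z X i j = 0" unfolding D_def madd_def msc_def mzero_def by (metis add_uminus_conv_diff mult_1 mult_minus1)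
      thus ?thesis by (intro ext) simp
    qed
  qed
qed

theorem lemma3p1:
  fixes n :: nat and x y z :: real
  assumes "n \<ge> 2" and "x > 0" and "y > 0" and "z > 0"
  shows "\<forall>X\<in>sl (n+1).
    ttcr (sl (n+1)) (gxyz n x y z) (comm (n+1)) X =
    block_op n (real n * x + z\<^sup>2 / x) ((real n + 1) * z\<^sup>2 / y)
               ((real n + 1) / real n * ((real n - 1) * x + y)) X"
proof -
  have n: "n \<ge> 1" using assms(1) by simp
  note x = assms(2) and y = assms(3) and z = assms(4)
  obtain es d where ub: "unitary_basis (sl (n+1)) (gxyz n x y z) es d" using ub_exists[OF n x y z] by blast
  have "ttcr (sl (n+1)) (gxyz n x y z) (comm (n+1)) = P0 n x y z"
    unfolding ttcr_def
  proof (rule the_equality)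
    show "is_ttcr (sl (n+1)) (gxyz n x y z) (comm (n+1)) (P0 n x y z) \<and> (\<forall>X. X \<notin> sl (n+1) \<longrightarrow> P0 n x y z X = mzero)"
      using P0_ttcr[OF n x y z] unfolding P0_def by simp
  next
    fix P assume "is_ttcr (sl (n+1)) (gxyz n x y z) (comm (n+1)) P \<and> (\<forall>X. X \<notin> sl (n+1) \<longrightarrow> P X = mzero)"
    thus "P = P0 n x y z" using uniq[OF n x y z _ _ ub] by blast
  qed
  thus ?thesis unfolding P0_def by simp
qed


end
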